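(* Each of the three families $\{h_\alpha(\mathbf{z})\}_{\alpha\vdash n}$, $\{\mathbf{C}_\alpha(\mathbf{z})\}_{\alpha\vdash n}$ and $\{\mathbf{K}_\alpha(\mathbf{z})\}_{\alpha\vdash n}$ is a $\mathbb{Q}$-basis of $\Lambda_n\otimes\mathbb{Q}$, the space of homogeneous symmetric functions of degree $n$.
   Context: $h_\alpha=h_{\alpha_1}\cdots h_{\alpha_k}$ is the complete homogeneous symmetric function. For $\alpha\vdash n$ and $\sigma\in S_n$ of cycle type $\alpha$ with order $o(\sigma)$, $\mathbf{C}_\alpha(\mathbf{z})=\frac1{o(\sigma)}\sum_{g\in\langle\sigma\rangle}p_{\lambda(g)}(\mathbf{z})$ where $\lambda(g)$ is the cycle type of $g$ and $p_\lambda$ the power sums (this does not depend on the choice of $\sigma$). Writing $\alpha=(i_1^{\alpha_1},\ldots,i_m^{\alpha_m})$ with distinct part sizes $i_j$ and multiplicities $\alpha_j$, $\mathbf{K}_\alpha(\mathbf{z})=\mathbf{C}_{i_1^{\alpha_1}}(\mathbf{z})\cdots\mathbf{C}_{i_m^{\alpha_m}}(\mathbf{z})$, where $i_j^{\alpha_j}$ is the partition with $\alpha_j$ parts equal to $i_j$. *)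

theory Defs
  imports Complex_Main "HOL-Library.Multiset" "HOL-Combinatorics.Orbits" "HOL-Combinatorics.Permutations"
begin

text \<open>Formal series in the variables z_0, z_1, ... with rational coefficients.
  A monomial is an exponent vector nat => nat (only finitely supported ones matter);
  a series is its coefficient function.\<close>

type_synonym mono = "nat \<Rightarrow> nat"
type_synonym sfun = "mono \<Rightarrow> rat"

definition fin_mono :: "mono \<Rightarrow> bool" where
  "fin_mono m \<longleftrightarrow> finite {i. m i \<noteq> 0}"

definition mdeg :: "mono \<Rightarrow> nat" where
  "mdeg m = (\<Sum>i\<in>{i. m i \<noteq> 0}. m i)"

definition Lambda :: "nat \<Rightarrow> sfun set" where
  "Lambda n = {f. (\<forall>m. f m \<noteq> 0 \<longrightarrow> fin_mono m \<and> mdeg m = n)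
                 \<and> (\<forall>\<sigma> m. bij \<sigma> \<longrightarrow> f (m \<circ> \<sigma>) = f m)}"

definition sf_one :: sfun where
  "sf_one m = (if \<forall>i. m i = 0 then 1 else 0)"

definition sf_mult :: "sfun \<Rightarrow> sfun \<Rightarrow> sfun" where
  "sf_mult f g m = (\<Sum>a\<in>{a. \<forall>i. a i \<le> m i}. f a * g (\<lambda>i. m i - a i))"

definition sf_prod :: "sfun list \<Rightarrow> sfun" where
  "sf_prod xs = foldr sf_mult xs sf_one"

definition sf_h :: "nat \<Rightarrow> sfun" where
  "sf_h k m = (if fin_mono m \<and> mdeg m = k then 1 else 0)"

definition sf_p :: "nat \<Rightarrow> sfun" where
  "sf_p k m = (if 0 < k \<and> (\<exists>i. m = (\<lambda>j. if j = i then k else 0)) then 1 else 0)"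

definition partitions :: "nat \<Rightarrow> nat multiset set" where
  "partitions n = {\<alpha>. (\<forall>x\<in>#\<alpha>. 0 < x) \<and> sum_mset \<alpha> = n}"

definition sf_hpart :: "nat multiset \<Rightarrow> sfun" where
  "sf_hpart \<alpha> = sf_prod (map sf_h (sorted_list_of_multiset \<alpha>))"

definition sf_ppart :: "nat multiset \<Rightarrow> sfun" where
  "sf_ppart \<alpha> = sf_prod (map sf_p (sorted_list_of_multiset \<alpha>))"

definition cycle_type :: "nat \<Rightarrow> (nat \<Rightarrow> nat) \<Rightarrow> nat multiset" where
  "cycle_type n g = image_mset card (mset_set {orbit g x | x. x < n})"

definition sf_C :: "nat multiset \<Rightarrow> sfun" where
  "sf_C \<alpha> = (let n = sum_mset \<alpha>;
                  \<sigma> = (SOME \<sigma>. \<sigma> permutes {0..<n} \<and> cycle_type n \<sigma> = \<alpha>);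
                  G = {\<sigma> ^^ k | k. True}
              in (\<lambda>m. (\<Sum>g\<in>G. sf_ppart (cycle_type n g) m) / of_nat (card G)))"

definition sf_K :: "nat multiset \<Rightarrow> sfun" where
  "sf_K \<alpha> = sf_prod (map (\<lambda>i. sf_C (replicate_mset (count \<alpha> i) i))
                          (sorted_list_of_set (set_mset \<alpha>)))"

definition is_basis_Lambda :: "nat \<Rightarrow> (nat multiset \<Rightarrow> sfun) \<Rightarrow> bool" where
  "is_basis_Lambda n b \<longleftrightarrow>
     (\<forall>\<alpha>\<in>partitions n. b \<alpha> \<in> Lambda n) \<and>
     (\<forall>c. (\<forall>m. (\<Sum>\<alpha>\<in>partitions n. c \<alpha> * b \<alpha> m) = 0) \<longrightarrow> (\<forall>\<alpha>\<in>partitions n. c \<alpha> = 0)) \<and>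
     (\<forall>f\<in>Lambda n. \<exists>c. \<forall>m. f m = (\<Sum>\<alpha>\<in>partitions n. c \<alpha> * b \<alpha> m))"

end

theory Submission
  imports Defs "HOL-Combinatorics.Cycles"
begin


definition DD :: "mono \<Rightarrow> mono set" where "DD m = {a. \<forall>i. a i \<le> m i}"
definition msub :: "mono \<Rightarrow> mono \<Rightarrow> mono" where "msub m a = (\<lambda>i. m i - a i)"

lemma sf_mult_DD: "sf_mult f g m = (\<Sum>a\<in>DD m. f a * g (msub m a))"
  by (simp add: sf_mult_def DD_def msub_def)

lemma finite_DD: assumes "fin_mono m" shows "finite (DD m)"
proof -
  let ?S = "{i. m i \<noteq> 0}"
  have fS: "finite ?S" using assms by (simp add: fin_mono_def)
  have "DD m \<subseteq> (\<lambda>f. \<lambda>i. if i \<in> ?S then f i else 0) ` (PiE ?S (\<lambda>i. {..m i}))"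
  proof
    fix a assume a: "a \<in> DD m"
    have "a = (\<lambda>i. if i \<in> ?S then (restrict a ?S) i else 0)"
      using a by (auto simp: DD_def fun_eq_iff) (metis le_zero_eq)
    moreover have "restrict a ?S \<in> PiE ?S (\<lambda>i. {..m i})" using a by (auto simp: DD_def)
    ultimately show "a \<in> (\<lambda>f. \<lambda>i. if i \<in> ?S then f i else 0) ` (PiE ?S (\<lambda>i. {..m i}))" by blast
  qed
  moreover have "finite (PiE ?S (\<lambda>i. {..m i}))" using fS by (intro finite_PiE) auto
  ultimately show ?thesis using finite_subset by blast
qed

lemma infinite_DD: assumes "\<not> fin_mono m" shows "infinite (DD m)"
proof
  assume f: "finite (DD m)"
  let ?e = "\<lambda>i. (\<lambda>j. if j = i then 1 else 0) :: mono"
  have "?e ` {i. m i \<noteq> 0} \<subseteq> DD m" by (auto simp: DD_def)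
  moreover have "inj_on ?e {i. m i \<noteq> 0}" by (auto simp: inj_on_def fun_eq_iff)
  ultimately have "finite {i. m i \<noteq> 0}" using f by (meson finite_imageD finite_subset)
  with assms show False by (simp add: fin_mono_def)
qed

lemma sf_mult_nonfin: "\<not> fin_mono m \<Longrightarrow> sf_mult f g m = 0"
  by (simp add: sf_mult_DD infinite_DD)

lemma sf_mult_comm: "sf_mult f g m = sf_mult g f m"
  unfolding sf_mult_DD
  by (rule sum.reindex_bij_witness[where i="msub m" and j="msub m"])
     (auto simp: DD_def msub_def fun_eq_iff mult.commute)

lemma fin_mono_le: assumes "fin_mono m" "a \<in> DD m" shows "fin_mono a"
proof -
  have "{i. a i \<noteq> 0} \<subseteq> {i. m i \<noteq> 0}"
  proof
    fix i assume "i \<in> {i. a i \<noteq> 0}"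
    moreover have "a i \<le> m i" using assms(2) by (simp add: DD_def)
    ultimately show "i \<in> {i. m i \<noteq> 0}" by simp
  qed
  thus ?thesis using assms(1) unfolding fin_mono_def by (rule finite_subset)
qed

lemma sf_mult_assoc: "sf_mult (sf_mult f g) h m = sf_mult f (sf_mult g h) m"
proof (cases "fin_mono m")
  case False thus ?thesis by (simp add: sf_mult_nonfin)
next
  case True
  have "sf_mult (sf_mult f g) h m = (\<Sum>c\<in>DD m. \<Sum>a\<in>DD c. f a * g (msub c a) * h (msub m c))"
    by (simp add: sf_mult_DD sum_distrib_right)
  also have "\<dots> = (\<Sum>(c,a)\<in>Sigma (DD m) DD. f a * g (msub c a) * h (msub m c))"
    by (intro sum.Sigma finite_DD ballI fin_mono_le[OF True] True)
  also have "\<dots> = (\<Sum>(a,b)\<in>Sigma (DD m) (\<lambda>a. DD (msub m a)). f a * (g b * h (msub (msub m a) b)))"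
  proof (rule sum.reindex_bij_witness[where i="\<lambda>(a,b). (\<lambda>i. a i + b i, a)" and j="\<lambda>(c,a). (a, msub c a)"])
    fix x assume "x \<in> Sigma (DD m) DD"
    then obtain c a where x: "x = (c,a)" and c: "\<forall>i. c i \<le> m i" and a: "\<forall>i. a i \<le> c i"
      by (auto simp: DD_def)
    show "(case case x of (c, a) \<Rightarrow> (a, msub c a) of (a, b) \<Rightarrow> (\<lambda>i. a i + b i, a)) = x"
      using a by (simp add: x msub_def fun_eq_iff)
    show "(case x of (c, a) \<Rightarrow> (a, msub c a)) \<in> Sigma (DD m) (\<lambda>a. DD (msub m a))"
      using a c by (auto simp: x msub_def DD_def intro: le_trans diff_le_mono)
    have e: "msub (msub m a) (msub c a) = msub m c" using a c by (simp add: msub_def fun_eq_iff)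
    show "(case case x of (c, a) \<Rightarrow> (a, msub c a) of (a, b) \<Rightarrow> f a * (g b * h (msub (msub m a) b))) =
          (case x of (c, a) \<Rightarrow> f a * g (msub c a) * h (msub m c))"
      by (simp add: x e mult.assoc)
  next
    fix y assume "y \<in> Sigma (DD m) (\<lambda>a. DD (msub m a))"
    then obtain a b where y: "y = (a,b)" and a: "\<forall>i. a i \<le> m i" and b: "\<forall>i. b i \<le> m i - a i"
      by (auto simp: DD_def msub_def)
    show "(case case y of (a, b) \<Rightarrow> (\<lambda>i. a i + b i, a) of (c, a) \<Rightarrow> (a, msub c a)) = y"
      by (simp add: y msub_def)
    show "(case y of (a, b) \<Rightarrow> (\<lambda>i. a i + b i, a)) \<in> Sigma (DD m) DD"
      using a b by (auto simp: y DD_def) (metis add.commute le_diff_conv2)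
  qed
  also have "\<dots> = (\<Sum>a\<in>DD m. \<Sum>b\<in>DD (msub m a). f a * (g b * h (msub (msub m a) b)))"
    by (intro sum.Sigma[symmetric] finite_DD ballI fin_mono_le[OF True] True)
      (auto simp: DD_def msub_def fin_mono_def intro: finite_subset[OF _ True[unfolded fin_mono_def]])
  also have "\<dots> = sf_mult f (sf_mult g h) m"
    by (simp add: sf_mult_DD sum_distrib_left)
  finally show ?thesis .
qed



lemma sf_mult_valid: "sf_mult f g m \<noteq> 0 \<Longrightarrow> fin_mono m"
  using sf_mult_nonfin by blast

lemma sf_mult_one: assumes "\<forall>m. f m \<noteq> 0 \<longrightarrow> fin_mono m" shows "sf_mult sf_one f m = f m"
proof (cases "fin_mono m")
  case False thus ?thesis using assms sf_mult_nonfin by metis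
next
  case True
  have "sf_mult sf_one f m = (\<Sum>a\<in>DD m. if a = (\<lambda>_. 0) then f (msub m a) else 0)"
    unfolding sf_mult_DD by (intro sum.cong) (auto simp: sf_one_def fun_eq_iff)
  also have "\<dots> = f (msub m (\<lambda>_. 0))"
    using True finite_DD[OF True] by (subst sum.delta) (auto simp: DD_def)
  also have "msub m (\<lambda>_. 0) = m" by (simp add: msub_def)
  finally show ?thesis .
qed

typedef sf = "{f::sfun. \<forall>m. f m \<noteq> 0 \<longrightarrow> fin_mono m}" morphisms S Ab
  by (rule exI[of _ "\<lambda>_. 0"]) simp

setup_lifting type_definition_sf

instantiation sf :: comm_ring_1
begin
lift_definition zero_sf :: sf is "\<lambda>_. 0" by simp
lift_definition one_sf :: sf is sf_one by (auto simp: sf_one_def fin_mono_def split: if_splits)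
lift_definition plus_sf :: "sf \<Rightarrow> sf \<Rightarrow> sf" is "\<lambda>f g m. f m + g m" by (metis add.right_neutral)
lift_definition minus_sf :: "sf \<Rightarrow> sf \<Rightarrow> sf" is "\<lambda>f g m. f m - g m" by (metis diff_zero)
lift_definition uminus_sf :: "sf \<Rightarrow> sf" is "\<lambda>f m. - f m" by fastforce
lift_definition times_sf :: "sf \<Rightarrow> sf \<Rightarrow> sf" is sf_mult by (rule sf_mult_valid)
instance
proof
  fix a b c :: sf
  show "a * b * c = a * (b * c)" by transfer (simp add: fun_eq_iff sf_mult_assoc)
  show "a * b = b * a" by transfer (simp add: fun_eq_iff sf_mult_comm)
  show "1 * a = a" by transfer (simp add: fun_eq_iff sf_mult_one)
  show "(a + b) * c = a * c + b * c" by transfer (simp add: fun_eq_iff sf_mult_DD sum.distrib algebra_simps)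
  show "a + b + c = a + (b + c)" by transfer (simp add: fun_eq_iff algebra_simps)
  show "a + b = b + a" by transfer (simp add: fun_eq_iff algebra_simps)
  show "0 + a = a" by transfer simp
  show "- a + a = 0" by transfer simp
  show "a - b = a + - b" by transfer simp
  show "(0::sf) \<noteq> 1" apply transfer apply (simp add: fun_eq_iff sf_one_def) by (rule exI[of _ "\<lambda>_. 0"]) simp
qed
end



definition valid :: "sfun \<Rightarrow> bool" where "valid f \<longleftrightarrow> (\<forall>m. f m \<noteq> 0 \<longrightarrow> fin_mono m)"

lemma S_Ab: "valid f \<Longrightarrow> S (Ab f) = f"
  by (simp add: Ab_inverse valid_def)

lemma valid_S: "valid (S x)"
  using S[of x] by (simp add: valid_def)

lemmas S_ops = zero_sf.rep_eq one_sf.rep_eq plus_sf.rep_eq minus_sf.rep_eq uminus_sf.rep_eq times_sf.rep_eq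

lemma S_sum: "S (\<Sum>t\<in>I. x t) m = (\<Sum>t\<in>I. S (x t) m)"
  by (induction I rule: infinite_finite_induct) (auto simp: S_ops)

definition sc :: "rat \<Rightarrow> sf" where "sc c = Ab (\<lambda>m. c * sf_one m)"

lemma S_sc: "S (sc c) = (\<lambda>m. c * sf_one m)"
  unfolding sc_def by (rule S_Ab) (auto simp: valid_def sf_one_def fin_mono_def split: if_splits)

lemma S_sc_mult: "S (sc c * x) m = c * S x m"
proof -
  have "S (sc c * x) m = sf_mult (\<lambda>m. c * sf_one m) (S x) m" by (simp add: S_ops S_sc)
  also have "\<dots> = c * sf_mult sf_one (S x) m" by (simp add: sf_mult_DD sum_distrib_left mult.assoc)
  also have "\<dots> = c * S x m" using valid_S[of x] by (simp add: sf_mult_one valid_def)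
  finally show ?thesis .
qed

lemma sc_eq: "(\<And>m. S x m = S y m) \<Longrightarrow> x = y"
  by (metis S_inject ext)

lemma sc_mult: "sc (a * b) = sc a * sc b"
  by (rule sc_eq) (simp add: S_sc_mult S_sc)

lemma sc_add: "sc (a + b) = sc a + sc b"
  by (rule sc_eq) (simp add: S_ops S_sc algebra_simps)

lemma sc_0: "sc 0 = 0"
  by (rule sc_eq) (simp add: S_ops S_sc)

lemma sc_1: "sc 1 = 1"
  by (rule sc_eq) (simp add: S_ops S_sc)

lemma sc_sum: "sc (\<Sum>t\<in>I. f t) = (\<Sum>t\<in>I. sc (f t))"
  by (induction I rule: infinite_finite_induct) (auto simp: sc_0 sc_add)

lemma sc_of_nat: "sc (of_nat k) = of_nat k"
  by (induction k) (auto simp: sc_0 sc_add sc_1)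

definition P :: "nat \<Rightarrow> sf" where "P k = Ab (sf_p k)"
definition H :: "nat \<Rightarrow> sf" where "H k = Ab (sf_h k)"

lemma valid_p: "valid (sf_p k)"
  by (auto simp: valid_def sf_p_def fin_mono_def split: if_splits)
lemma valid_h: "valid (sf_h k)"
  by (auto simp: valid_def sf_h_def split: if_splits)

lemma S_P: "S (P k) = sf_p k" by (simp add: P_def S_Ab valid_p)
lemma S_H: "S (H k) = sf_h k" by (simp add: H_def S_Ab valid_h)

lemma sf_prod_S: "(\<forall>x\<in>set xs. valid x) \<Longrightarrow> sf_prod xs = S (prod_list (map Ab xs))"
proof (induction xs)
  case Nil thus ?case by (simp add: sf_prod_def S_ops)
next
  case (Cons a xs)
  thus ?case by (simp add: sf_prod_def S_ops S_Ab)
qed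

definition pp :: "nat multiset \<Rightarrow> sf" where "pp \<alpha> = (\<Prod>x\<in>#\<alpha>. P x)"
definition hp :: "nat multiset \<Rightarrow> sf" where "hp \<alpha> = (\<Prod>x\<in>#\<alpha>. H x)"

lemma pp_add: "pp (a + b) = pp a * pp b" by (simp add: pp_def)
lemma pp_empty: "pp {#} = 1" by (simp add: pp_def)
lemma pp_single: "pp {#k#} = P k" by (simp add: pp_def)

lemma sf_ppart_S: "sf_ppart \<alpha> = S (pp \<alpha>)"
proof -
  have "sf_ppart \<alpha> = S (prod_list (map Ab (map sf_p (sorted_list_of_multiset \<alpha>))))"
    unfolding sf_ppart_def by (rule sf_prod_S) (auto simp: valid_p)
  also have "prod_list (map Ab (map sf_p (sorted_list_of_multiset \<alpha>))) = pp \<alpha>"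
    unfolding pp_def P_def prod_mset_prod_list[symmetric] by (simp add: comp_def)
  finally show ?thesis .
qed

lemma sf_hpart_S: "sf_hpart \<alpha> = S (hp \<alpha>)"
proof -
  have "sf_hpart \<alpha> = S (prod_list (map Ab (map sf_h (sorted_list_of_multiset \<alpha>))))"
    unfolding sf_hpart_def by (rule sf_prod_S) (auto simp: valid_h)
  also have "prod_list (map Ab (map sf_h (sorted_list_of_multiset \<alpha>))) = hp \<alpha>"
    unfolding hp_def H_def prod_mset_prod_list[symmetric] by (simp add: comp_def)
  finally show ?thesis .
qed

definition sig :: "nat multiset \<Rightarrow> nat \<Rightarrow> nat" where
  "sig \<alpha> = (SOME \<sigma>. \<sigma> permutes {0..<sum_mset \<alpha>} \<and> cycle_type (sum_mset \<alpha>) \<sigma> = \<alpha>)"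
definition Gs :: "nat multiset \<Rightarrow> (nat \<Rightarrow> nat) set" where
  "Gs \<alpha> = {sig \<alpha> ^^ k | k. True}"
definition CC :: "nat multiset \<Rightarrow> sf" where
  "CC \<alpha> = (\<Sum>g\<in>Gs \<alpha>. sc (1 / of_nat (card (Gs \<alpha>))) * pp (cycle_type (sum_mset \<alpha>) g))"

lemma sf_C_S: "sf_C \<alpha> = S (CC \<alpha>)"
proof
  fix m
  have "sf_C \<alpha> m = (\<Sum>g\<in>Gs \<alpha>. sf_ppart (cycle_type (sum_mset \<alpha>) g) m) / of_nat (card (Gs \<alpha>))"
    by (simp add: sf_C_def Let_def sig_def Gs_def)
  also have "\<dots> = S (CC \<alpha>) m"
    by (simp add: CC_def S_sum S_sc_mult sf_ppart_S sum_divide_distrib)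
  finally show "sf_C \<alpha> m = S (CC \<alpha>) m" .
qed

definition KK :: "nat multiset \<Rightarrow> sf" where
  "KK \<alpha> = (\<Prod>i\<in>set_mset \<alpha>. CC (replicate_mset (count \<alpha> i) i))"

lemma sf_K_S: "sf_K \<alpha> = S (KK \<alpha>)"
proof -
  have v: "valid (sf_C \<beta>)" for \<beta> by (simp add: sf_C_S valid_S)
  have "sf_K \<alpha> = S (prod_list (map Ab (map (\<lambda>i. sf_C (replicate_mset (count \<alpha> i) i)) (sorted_list_of_set (set_mset \<alpha>)))))"
    unfolding sf_K_def by (rule sf_prod_S) (auto simp: v)
  also have "prod_list (map Ab (map (\<lambda>i. sf_C (replicate_mset (count \<alpha> i) i)) (sorted_list_of_set (set_mset \<alpha>)))) = KK \<alpha>"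
  proof -
    have "map Ab (map (\<lambda>i. sf_C (replicate_mset (count \<alpha> i) i)) (sorted_list_of_set (set_mset \<alpha>)))
       = map (\<lambda>i. CC (replicate_mset (count \<alpha> i) i)) (sorted_list_of_set (set_mset \<alpha>))"
      by (simp add: sf_C_S S_inverse)
    thus ?thesis unfolding KK_def
      by (simp add: prod.distinct_set_conv_list[symmetric])
  qed
  finally show ?thesis .
qed



abbreviation PT where "PT \<equiv> partitions"

lemma size_le_sum: "(\<forall>x\<in>#\<alpha>. 0 < (x::nat)) \<Longrightarrow> size \<alpha> \<le> sum_mset \<alpha>"
  by (induction \<alpha>) auto

lemma mem_le_sum: "x \<in># \<alpha> \<Longrightarrow> x \<le> sum_mset (\<alpha>::nat multiset)"
  by (induction \<alpha>) auto

lemma finite_PT: "finite (PT n)"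
proof -
  have "PT n \<subseteq> mset ` {xs. set xs \<subseteq> {0..n} \<and> length xs \<le> n}"
  proof
    fix \<alpha> assume a: "\<alpha> \<in> PT n"
    have 1: "\<alpha> = mset (sorted_list_of_multiset \<alpha>)" by (rule mset_sorted_list_of_multiset[symmetric])
    have 2: "set (sorted_list_of_multiset \<alpha>) \<subseteq> {0..n}"
    proof
      fix x assume "x \<in> set (sorted_list_of_multiset \<alpha>)"
      hence "x \<in># \<alpha>" by simp
      hence "x \<le> sum_mset \<alpha>" by (rule mem_le_sum)
      thus "x \<in> {0..n}" using a by (simp add: partitions_def)
    qed
    have 3: "length (sorted_list_of_multiset \<alpha>) = size \<alpha>"
      by (metis mset_sorted_list_of_multiset size_mset)
    have 4: "size \<alpha> \<le> n"
      using a size_le_sum[of \<alpha>] by (simp add: partitions_def)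
    have "sorted_list_of_multiset \<alpha> \<in> {xs. set xs \<subseteq> {0..n} \<and> length xs \<le> n}"
      using 2 3 4 by simp
    thus "\<alpha> \<in> mset ` {xs. set xs \<subseteq> {0..n} \<and> length xs \<le> n}"
      using 1 by (rule rev_image_eqI)
  qed
  moreover have "finite (mset ` {xs. set xs \<subseteq> {0..n} \<and> length xs \<le> n})"
    using finite_lists_length_le[of "{0..n}" n] by simp
  ultimately show ?thesis by (rule finite_subset)
qed

lemma PT_add: "a \<in> PT n1 \<Longrightarrow> b \<in> PT n2 \<Longrightarrow> a + b \<in> PT (n1 + n2)"
  by (auto simp: partitions_def)

lemma PT_0: "PT 0 = {{#}}"
proof -
  have "\<alpha> = {#}" if "\<forall>x\<in>#\<alpha>. 0 < x" "sum_mset \<alpha> = 0" for \<alpha> :: "nat multiset"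
  proof (rule ccontr)
    assume "\<alpha> \<noteq> {#}"
    then obtain x where "x \<in># \<alpha>" by blast
    thus False using that mem_le_sum[of x \<alpha>] by fastforce
  qed
  thus ?thesis by (auto simp: partitions_def)
qed

definition REP :: "nat \<Rightarrow> sf \<Rightarrow> (nat multiset \<Rightarrow> rat) \<Rightarrow> bool" where
  "REP n x c \<longleftrightarrow> x = (\<Sum>\<nu>\<in>PT n. sc (c \<nu>) * pp \<nu>)"

definition conv :: "nat \<Rightarrow> nat \<Rightarrow> (nat multiset \<Rightarrow> rat) \<Rightarrow> (nat multiset \<Rightarrow> rat) \<Rightarrow> nat multiset \<Rightarrow> rat" where
  "conv n1 n2 c1 c2 \<nu> = (\<Sum>p\<in>{p\<in>PT n1 \<times> PT n2. fst p + snd p = \<nu>}. c1 (fst p) * c2 (snd p))"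

lemma REP_mult:
  assumes "REP n1 x c1" "REP n2 y c2"
  shows "REP (n1 + n2) (x * y) (conv n1 n2 c1 c2)"
proof -
  have "x * y = (\<Sum>a\<in>PT n1. \<Sum>b\<in>PT n2. (sc (c1 a) * pp a) * (sc (c2 b) * pp b))"
    using assms by (simp add: REP_def sum_product)
  also have "\<dots> = (\<Sum>p\<in>PT n1 \<times> PT n2. sc (c1 (fst p) * c2 (snd p)) * pp (fst p + snd p))"
    by (simp add: sum.cartesian_product sc_mult pp_add algebra_simps case_prod_beta)
  also have "\<dots> = (\<Sum>\<nu>\<in>PT (n1+n2). \<Sum>p\<in>{p\<in>PT n1 \<times> PT n2. fst p + snd p = \<nu>}. sc (c1 (fst p) * c2 (snd p)) * pp (fst p + snd p))"
    by (rule sum.group[symmetric]) (auto simp: finite_PT PT_add)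
  also have "\<dots> = (\<Sum>\<nu>\<in>PT (n1+n2). sc (conv n1 n2 c1 c2 \<nu>) * pp \<nu>)"
    unfolding conv_def sc_sum sum_distrib_right
    by (intro sum.cong refl) auto
  finally show ?thesis by (simp add: REP_def)
qed

lemma conv_nonneg: "(\<forall>\<nu>. 0 \<le> c1 \<nu>) \<Longrightarrow> (\<forall>\<nu>. 0 \<le> c2 \<nu>) \<Longrightarrow> 0 \<le> conv n1 n2 c1 c2 \<nu>"
  unfolding conv_def by (intro sum_nonneg) auto

lemma conv_pos:
  assumes "\<forall>\<nu>. 0 \<le> c1 \<nu>" "\<forall>\<nu>. 0 \<le> c2 \<nu>" "a \<in> PT n1" "b \<in> PT n2" "0 < c1 a" "0 < c2 b"
  shows "0 < conv n1 n2 c1 c2 (a + b)"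
proof -
  have m: "(a,b) \<in> {p\<in>PT n1 \<times> PT n2. fst p + snd p = a + b}" using assms by simp
  have f: "finite {p\<in>PT n1 \<times> PT n2. fst p + snd p = a + b}" by (simp add: finite_PT)
  have "c1 (fst (a,b)) * c2 (snd (a,b)) \<le> conv n1 n2 c1 c2 (a + b)"
    unfolding conv_def by (rule member_le_sum[OF m _ f]) (auto simp: assms)
  hence "c1 a * c2 b \<le> conv n1 n2 c1 c2 (a + b)" by simp
  moreover have "0 < c1 a * c2 b" using assms by simp
  ultimately show ?thesis by linarith
qed

lemma conv_nz:
  assumes "conv n1 n2 c1 c2 \<nu> \<noteq> 0"
  shows "\<exists>a b. a \<in> PT n1 \<and> b \<in> PT n2 \<and> c1 a \<noteq> 0 \<and> c2 b \<noteq> 0 \<and> \<nu> = a + b"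
proof -
  from assms obtain p where "p \<in> {p\<in>PT n1 \<times> PT n2. fst p + snd p = \<nu>}" "c1 (fst p) * c2 (snd p) \<noteq> 0"
    unfolding conv_def by (rule sum.not_neutral_contains_not_neutral)
  thus ?thesis by (cases p) auto
qed

lemma REP_add: "REP n x c \<Longrightarrow> REP n y d \<Longrightarrow> REP n (x + y) (\<lambda>\<nu>. c \<nu> + d \<nu>)"
  by (simp add: REP_def sc_add sum.distrib algebra_simps)

lemma REP_scale: "REP n x c \<Longrightarrow> REP n (sc r * x) (\<lambda>\<nu>. r * c \<nu>)"
  by (simp add: REP_def sum_distrib_left sc_mult mult.assoc)

lemma REP_sum: "finite I \<Longrightarrow> (\<And>i. i \<in> I \<Longrightarrow> REP n (X i) (c i)) \<Longrightarrow> REP n (\<Sum>i\<in>I. X i) (\<lambda>\<nu>. \<Sum>i\<in>I. c i \<nu>)"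
proof (induction I rule: finite_induct)
  case empty thus ?case by (simp add: REP_def sc_0)
next
  case (insert i I)
  have "REP n (X i + (\<Sum>i\<in>I. X i)) (\<lambda>\<nu>. c i \<nu> + (\<Sum>i\<in>I. c i \<nu>))"
    using insert by (intro REP_add) auto
  thus ?case using insert by simp
qed

lemma REP_single: "\<beta> \<in> PT n \<Longrightarrow> REP n (pp \<beta>) (\<lambda>\<nu>. if \<nu> = \<beta> then 1 else 0)"
proof -
  assume b: "\<beta> \<in> PT n"
  have "(\<Sum>\<nu>\<in>PT n. sc (if \<nu> = \<beta> then 1 else 0) * pp \<nu>) = (\<Sum>\<nu>\<in>PT n. if \<nu> = \<beta> then pp \<nu> else 0)"
    by (intro sum.cong) (auto simp: sc_0 sc_1)
  also have "\<dots> = pp \<beta>" using b finite_PT by simp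
  finally show ?thesis by (simp add: REP_def)
qed

definition TR :: "nat \<Rightarrow> nat multiset \<Rightarrow> sf \<Rightarrow> bool" where
  "TR n \<alpha> x \<longleftrightarrow> \<alpha> \<in> PT n \<and> (\<exists>c. REP n x c \<and> (\<forall>\<nu>. 0 \<le> c \<nu>) \<and> 0 < c \<alpha> \<and>
      (\<forall>\<nu>\<in>PT n. c \<nu> \<noteq> 0 \<longrightarrow> \<nu> = \<alpha> \<or> size \<alpha> < size \<nu>))"

lemma TR_mult:
  assumes "TR n1 a1 x" "TR n2 a2 y"
  shows "TR (n1 + n2) (a1 + a2) (x * y)"
proof -
  obtain c1 where c1: "REP n1 x c1" "\<forall>\<nu>. 0 \<le> c1 \<nu>" "0 < c1 a1" "\<forall>\<nu>\<in>PT n1. c1 \<nu> \<noteq> 0 \<longrightarrow> \<nu> = a1 \<or> size a1 < size \<nu>"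
    and a1: "a1 \<in> PT n1" using assms(1) by (auto simp: TR_def)
  obtain c2 where c2: "REP n2 y c2" "\<forall>\<nu>. 0 \<le> c2 \<nu>" "0 < c2 a2" "\<forall>\<nu>\<in>PT n2. c2 \<nu> \<noteq> 0 \<longrightarrow> \<nu> = a2 \<or> size a2 < size \<nu>"
    and a2: "a2 \<in> PT n2" using assms(2) by (auto simp: TR_def)
  have "\<nu> = a1 + a2 \<or> size (a1 + a2) < size \<nu>" if nz: "conv n1 n2 c1 c2 \<nu> \<noteq> 0" for \<nu>
  proof -
    obtain a b where ab: "a \<in> PT n1" "b \<in> PT n2" "c1 a \<noteq> 0" "c2 b \<noteq> 0" "\<nu> = a + b"
      using conv_nz[OF nz] by blast
    have "a = a1 \<or> size a1 < size a" using c1(4) ab by blast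
    moreover have "b = a2 \<or> size a2 < size b" using c2(4) ab by blast
    ultimately show ?thesis using ab(5) by auto
  qed
  thus ?thesis unfolding TR_def
    using REP_mult[OF c1(1) c2(1)] conv_nonneg[OF c1(2) c2(2)] conv_pos[OF c1(2) c2(2) a1 a2 c1(3) c2(3)]
      PT_add[OF a1 a2] by blast
qed

lemma TR_one: "TR 0 {#} 1"
  unfolding TR_def using REP_single[of "{#}" 0] by (auto simp: PT_0 pp_empty)

lemma TR_prod_mset:
  "(\<And>i. i \<in># M \<Longrightarrow> TR (nn i) (aa i) (X i)) \<Longrightarrow> TR (\<Sum>i\<in>#M. nn i) (\<Sum>i\<in>#M. aa i) (\<Prod>i\<in>#M. X i)"
proof (induction M)
  case empty thus ?case by (simp add: TR_one)
next
  case (add i M)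
  have "TR (nn i + (\<Sum>i\<in>#M. nn i)) (aa i + (\<Sum>i\<in>#M. aa i)) (X i * (\<Prod>i\<in>#M. X i))"
    using add by (intro TR_mult) auto
  thus ?case by simp
qed

lemma TR_prod_set:
  assumes "finite A" "\<And>i. i \<in> A \<Longrightarrow> TR (nn i) (aa i) (X i)"
  shows "TR (\<Sum>i\<in>A. nn i) (\<Sum>i\<in>A. aa i) (\<Prod>i\<in>A. X i)"
  using TR_prod_mset[of "mset_set A" nn aa X] assms
  by (simp add: sum_unfold_sum_mset prod_unfold_prod_mset)

lemma TR_intro:
  assumes fin: "finite I" and part: "\<And>t. t \<in> I \<Longrightarrow> \<nu> t \<in> PT n"
    and nn: "\<And>t. t \<in> I \<Longrightarrow> 0 \<le> w t"
    and tri: "\<And>t. t \<in> I \<Longrightarrow> 0 < w t \<Longrightarrow> \<nu> t = \<alpha> \<or> size \<alpha> < size (\<nu> t)"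
    and tz: "tz \<in> I" "0 < w tz" "\<nu> tz = \<alpha>"
  shows "TR n \<alpha> (\<Sum>t\<in>I. sc (w t) * pp (\<nu> t))"
proof -
  define c where "c \<beta> = (\<Sum>t\<in>{t\<in>I. \<nu> t = \<beta>}. w t)" for \<beta>
  have "(\<Sum>t\<in>I. sc (w t) * pp (\<nu> t)) = (\<Sum>\<beta>\<in>PT n. \<Sum>t\<in>{t\<in>I. \<nu> t = \<beta>}. sc (w t) * pp (\<nu> t))"
    by (rule sum.group[symmetric]) (auto simp: fin finite_PT part)
  also have "\<dots> = (\<Sum>\<beta>\<in>PT n. sc (c \<beta>) * pp \<beta>)"
    unfolding c_def sc_sum sum_distrib_right by (intro sum.cong refl) auto
  finally have R: "REP n (\<Sum>t\<in>I. sc (w t) * pp (\<nu> t)) c" by (simp add: REP_def)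
  have c0: "0 \<le> c \<beta>" for \<beta> unfolding c_def by (intro sum_nonneg) (auto simp: nn)
  have "w tz \<le> c \<alpha>" unfolding c_def
    by (rule member_le_sum) (auto simp: tz nn fin)
  hence cpos: "0 < c \<alpha>" using tz by linarith
  have ctri: "\<beta> = \<alpha> \<or> size \<alpha> < size \<beta>" if "c \<beta> \<noteq> 0" for \<beta>
  proof -
    obtain t where "t \<in> {t\<in>I. \<nu> t = \<beta>}" "w t \<noteq> 0"
      using \<open>c \<beta> \<noteq> 0\<close> unfolding c_def by (rule sum.not_neutral_contains_not_neutral)
    moreover from this have "0 < w t" using nn[of t] by simp
    ultimately show ?thesis using tri[of t] by auto
  qed
  show ?thesis unfolding TR_def using R c0 cpos ctri part tz by blast
qed



definition supp :: "mono \<Rightarrow> nat set" where "supp m = {i. m i \<noteq> 0}"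

lemma mdeg_superset: "finite F \<Longrightarrow> supp m \<subseteq> F \<Longrightarrow> mdeg m = (\<Sum>l\<in>F. m l)"
  unfolding mdeg_def supp_def by (rule sum.mono_neutral_left) auto

lemma mdeg_update:
  assumes fin: "fin_mono m" and ij: "i \<le> m j"
  shows "mdeg (m(j := m j - i)) + i = mdeg m"
proof -
  let ?F = "insert j (supp m)"
  have fF: "finite ?F" using fin by (simp add: fin_mono_def supp_def)
  have "mdeg (m(j := m j - i)) = (\<Sum>l\<in>?F. (m(j := m j - i)) l)"
    by (rule mdeg_superset[OF fF]) (auto simp: supp_def)
  also have "\<dots> = (m(j := m j - i)) j + (\<Sum>l\<in>?F - {j}. (m(j := m j - i)) l)"
    using fF by (rule sum.remove) simp
  also have "(\<Sum>l\<in>?F - {j}. (m(j := m j - i)) l) = (\<Sum>l\<in>?F - {j}. m l)"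
    by (intro sum.cong) auto
  also have "(m(j := m j - i)) j = m j - i" by simp
  finally have 1: "mdeg (m(j := m j - i)) = (m j - i) + (\<Sum>l\<in>?F - {j}. m l)" .
  have "mdeg m = (\<Sum>l\<in>?F. m l)" by (rule mdeg_superset[OF fF]) auto
  also have "\<dots> = m j + (\<Sum>l\<in>?F - {j}. m l)" using fF by (rule sum.remove) simp
  finally show ?thesis using 1 ij by simp
qed

lemma fin_mono_update: "fin_mono m \<Longrightarrow> fin_mono (m(j := v))"
proof -
  assume "fin_mono m"
  hence "finite (insert j {i. m i \<noteq> 0})" by (simp add: fin_mono_def)
  moreover have "{i. (m(j := v)) i \<noteq> 0} \<subseteq> insert j {i. m i \<noteq> 0}" by auto
  ultimately show ?thesis unfolding fin_mono_def by (rule finite_subset[rotated])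
qed

definition ei :: "nat \<Rightarrow> nat \<Rightarrow> mono" where "ei k j = (\<lambda>l. if l = j then k else 0)"

lemma sf_p_eq: "sf_p k a = (if 0 < k \<and> (\<exists>j. a = ei k j) then 1 else 0)"
  by (simp add: sf_p_def ei_def)

lemma sf_mult_p:
  assumes fin: "fin_mono m" and k: "0 < k"
  shows "sf_mult (sf_p k) g m = (\<Sum>j\<in>{j. k \<le> m j}. g (m(j := m j - k)))"
proof -
  have fE: "finite {j. k \<le> m j}"
  proof (rule finite_subset)
    show "{j. k \<le> m j} \<subseteq> {i. m i \<noteq> 0}" using k by auto
    show "finite {i. m i \<noteq> 0}" using fin by (simp add: fin_mono_def)
  qed
  have sub: "ei k ` {j. k \<le> m j} \<subseteq> DD m"
  proof
    fix a assume "a \<in> ei k ` {j. k \<le> m j}"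
    then obtain j where j: "k \<le> m j" "a = ei k j" by blast
    show "a \<in> DD m" unfolding DD_def
    proof (intro CollectI allI)
      fix l show "a l \<le> m l" using j by (simp add: ei_def)
    qed
  qed
  have "sf_mult (sf_p k) g m = (\<Sum>a\<in>DD m. sf_p k a * g (msub m a))" by (rule sf_mult_DD)
  also have "\<dots> = (\<Sum>a\<in>ei k ` {j. k \<le> m j}. sf_p k a * g (msub m a))"
  proof (rule sum.mono_neutral_right[OF finite_DD[OF fin] sub])
    show "\<forall>a\<in>DD m - ei k ` {j. k \<le> m j}. sf_p k a * g (msub m a) = 0"
    proof
      fix a assume a: "a \<in> DD m - ei k ` {j. k \<le> m j}"
      have "\<not> (\<exists>j. a = ei k j)"
      proof
        assume "\<exists>j. a = ei k j"
        then obtain j where j: "a = ei k j" by blast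
        have "a j \<le> m j" using a by (simp add: DD_def)
        moreover have "a j = k" by (simp add: j ei_def)
        ultimately have "j \<in> {j. k \<le> m j}" by simp
        thus False using a j by blast
      qed
      thus "sf_p k a * g (msub m a) = 0" by (simp add: sf_p_eq)
    qed
  qed
  also have "\<dots> = (\<Sum>j\<in>{j. k \<le> m j}. sf_p k (ei k j) * g (msub m (ei k j)))"
  proof (rule sum.reindex[unfolded comp_def])
    show "inj_on (ei k) {j. k \<le> m j}"
    proof (rule inj_onI)
      fix x y assume "ei k x = ei k y"
      hence "ei k x x = ei k y x" by simp
      thus "x = y" using k by (simp add: ei_def split: if_splits)
    qed
  qed
  also have "\<dots> = (\<Sum>j\<in>{j. k \<le> m j}. g (m(j := m j - k)))"
  proof (intro sum.cong refl)
    fix j assume "j \<in> {j. k \<le> m j}"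
    have 1: "sf_p k (ei k j) = 1" using k by (auto simp: sf_p_eq)
    have 2: "msub m (ei k j) = m(j := m j - k)" by (simp add: msub_def ei_def fun_eq_iff)
    show "sf_p k (ei k j) * g (msub m (ei k j)) = g (m(j := m j - k))" by (simp add: 1 2)
  qed
  finally show ?thesis .
qed

lemma sum_ind_card: "finite X \<Longrightarrow> (\<Sum>j\<in>X. if Q j then 1 else 0) = (card {j\<in>X. Q j} :: nat)"
  by (simp add: sum.inter_filter[symmetric])

lemma count_identity:
  assumes fin: "fin_mono m" and deg: "mdeg m = k"
  shows "(\<Sum>i\<in>{1..k}. card {j. i \<le> m j}) = k"
proof -
  let ?S = "supp m"
  have fS: "finite ?S" using fin by (simp add: fin_mono_def supp_def)
  have le: "m j \<le> k" for j
  proof (cases "j \<in> ?S")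
    case True
    have "m j \<le> (\<Sum>l\<in>?S. m l)" by (rule member_le_sum[OF True _ fS]) auto
    thus ?thesis using deg by (simp add: mdeg_def supp_def)
  next
    case False thus ?thesis by (simp add: supp_def)
  qed
  have "(\<Sum>i\<in>{1..k}. card {j. i \<le> m j}) = (\<Sum>i\<in>{1..k}. \<Sum>j\<in>?S. if i \<le> m j then 1 else 0)"
  proof (intro sum.cong refl)
    fix i assume i: "i \<in> {1..k}"
    have "{j. i \<le> m j} = {j\<in>?S. i \<le> m j}" using i by (auto simp: supp_def)
    thus "card {j. i \<le> m j} = (\<Sum>j\<in>?S. if i \<le> m j then 1 else 0)"
      using fS by (simp add: sum_ind_card)
  qed
  also have "\<dots> = (\<Sum>j\<in>?S. \<Sum>i\<in>{1..k}. if i \<le> m j then 1 else 0)" by (rule sum.swap)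
  also have "\<dots> = (\<Sum>j\<in>?S. m j)"
  proof (intro sum.cong refl)
    fix j assume "j \<in> ?S"
    have "{i\<in>{1..k}. i \<le> m j} = {1..m j}" using le[of j] by auto
    have "(\<Sum>i\<in>{1..k}. if i \<le> m j then 1 else 0) = card {i\<in>{1..k}. i \<le> m j}"
      by (simp add: sum_ind_card)
    thus "(\<Sum>i\<in>{1..k}. if i \<le> m j then 1 else 0) = m j" using \<open>{i\<in>{1..k}. i \<le> m j} = {1..m j}\<close> by simp
  qed
  also have "\<dots> = k" using deg by (simp add: mdeg_def supp_def)
  finally show ?thesis .
qed

lemma newton:
  "of_nat k * H k = (\<Sum>i\<in>{1..k}. P i * H (k - i))"
proof (rule sc_eq)
  fix m
  have L: "S (of_nat k * H k) m = of_nat k * sf_h k m"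
    by (simp add: sc_of_nat[symmetric] S_sc_mult S_H)
  have R: "S (\<Sum>i\<in>{1..k}. P i * H (k - i)) m = (\<Sum>i\<in>{1..k}. sf_mult (sf_p i) (sf_h (k - i)) m)"
    by (simp add: S_sum S_ops S_P S_H)
  show "S (of_nat k * H k) m = S (\<Sum>i\<in>{1..k}. P i * H (k - i)) m"
  proof (cases "fin_mono m")
    case False
    thus ?thesis unfolding L R by (simp add: sf_mult_nonfin sf_h_def)
  next
    case fin: True
    have tm: "sf_mult (sf_p i) (sf_h (k - i)) m = (if mdeg m = k then of_nat (card {j. i \<le> m j}) else 0)"
      if i: "i \<in> {1..k}" for i
    proof -
      have "sf_mult (sf_p i) (sf_h (k - i)) m = (\<Sum>j\<in>{j. i \<le> m j}. sf_h (k - i) (m(j := m j - i)))"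
        using i by (intro sf_mult_p fin) auto
      also have "\<dots> = (\<Sum>j\<in>{j. i \<le> m j}. if mdeg m = k then 1 else 0)"
      proof (intro sum.cong refl)
        fix j assume "j \<in> {j. i \<le> m j}"
        hence ij: "i \<le> m j" by simp
        have d: "mdeg (m(j := m j - i)) + i = mdeg m" by (rule mdeg_update[OF fin ij])
        have "(mdeg (m(j := m j - i)) = k - i) = (mdeg m = k)" using d i by auto
        thus "sf_h (k - i) (m(j := m j - i)) = (if mdeg m = k then 1 else 0)"
          by (simp add: sf_h_def fin_mono_update[OF fin])
      qed
      also have "\<dots> = (if mdeg m = k then of_nat (card {j. i \<le> m j}) else 0)" by simp
      finally show ?thesis .
    qed
    have "S (\<Sum>i\<in>{1..k}. P i * H (k - i)) m = (\<Sum>i\<in>{1..k}. if mdeg m = k then of_nat (card {j. i \<le> m j}) else 0)"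
      unfolding R by (intro sum.cong refl tm)
    also have "\<dots> = (if mdeg m = k then of_nat (\<Sum>i\<in>{1..k}. card {j. i \<le> m j}) else 0)" by simp
    also have "\<dots> = (if mdeg m = k then of_nat k else 0)"
    proof (cases "mdeg m = k")
      case True
      have ci: "(\<Sum>i\<in>{1..k}. card {j. i \<le> m j}) = k" by (rule count_identity[OF fin True])
      show ?thesis by (simp only: ci if_True True simp_thms)
    next
      case False thus ?thesis by simp
    qed
    also have "\<dots> = S (of_nat k * H k) m" unfolding L by (simp add: sf_h_def fin)
    finally show ?thesis by simp
  qed
qed

lemma H0: "H 0 = 1"
proof (rule sc_eq)
  fix m
  have "(fin_mono m \<and> mdeg m = 0) = (\<forall>i. m i = 0)"
  proof
    assume a: "fin_mono m \<and> mdeg m = 0"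
    show "\<forall>i. m i = 0"
    proof
      fix i show "m i = 0"
      proof (rule ccontr)
        assume "m i \<noteq> 0"
        hence "m i \<le> mdeg m" unfolding mdeg_def using a
          by (intro member_le_sum) (auto simp: fin_mono_def)
        thus False using a \<open>m i \<noteq> 0\<close> by simp
      qed
    qed
  next
    assume "\<forall>i. m i = 0"
    thus "fin_mono m \<and> mdeg m = 0" by (simp add: fin_mono_def mdeg_def)
  qed
  thus "S (H 0) m = S 1 m" by (simp add: S_H S_ops sf_h_def sf_one_def)
qed



lemma single_PT: "0 < k \<Longrightarrow> {#k#} \<in> PT k"
  by (simp add: partitions_def)

lemma REP_P: "0 < k \<Longrightarrow> REP k (P k) (\<lambda>\<nu>. if \<nu> = {#k#} then 1 else 0)"
  using REP_single[OF single_PT, of k] by (simp add: pp_single)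

lemma sc_inv_nat: "0 < k \<Longrightarrow> sc (1 / of_nat k) * of_nat k = 1"
  by (simp add: sc_of_nat[symmetric] sc_mult[symmetric] sc_1)

lemma H_REP: "1 \<le> k \<Longrightarrow> \<exists>c. REP k (H k) c \<and> (\<forall>\<nu>. 0 \<le> c \<nu>) \<and> 0 < c {#k#}"
proof (induction k rule: less_induct)
  case (less k)
  have "\<forall>i\<in>{1..<k}. \<exists>c. REP (k - i) (H (k - i)) c \<and> (\<forall>\<nu>. 0 \<le> c \<nu>)"
  proof
    fix i assume "i \<in> {1..<k}"
    hence "k - i < k" "1 \<le> k - i" by auto
    thus "\<exists>c. REP (k - i) (H (k - i)) c \<and> (\<forall>\<nu>. 0 \<le> c \<nu>)" using less.IH by blast
  qed
  then obtain cf where cf: "\<And>i. i \<in> {1..<k} \<Longrightarrow> REP (k - i) (H (k - i)) (cf i) \<and> (\<forall>\<nu>. 0 \<le> cf i \<nu>)"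
    by metis
  define ind where "ind i = (\<lambda>\<nu>::nat multiset. if \<nu> = {#i#} then 1 else (0::rat))" for i :: nat
  define d where "d i = conv i (k - i) (ind i) (cf i)" for i
  have Ri: "REP k (P i * H (k - i)) (d i)" if i: "i \<in> {1..<k}" for i
  proof -
    have "REP (i + (k - i)) (P i * H (k - i)) (d i)"
      unfolding d_def using i cf[OF i] REP_P[of i] by (intro REP_mult) (auto simp: ind_def)
    thus ?thesis using i by simp
  qed
  have R1: "REP k (\<Sum>i\<in>{1..<k}. P i * H (k - i)) (\<lambda>\<nu>. \<Sum>i\<in>{1..<k}. d i \<nu>)"
    by (rule REP_sum) (auto intro: Ri)
  have R2: "REP k (P k + (\<Sum>i\<in>{1..<k}. P i * H (k - i))) (\<lambda>\<nu>. ind k \<nu> + (\<Sum>i\<in>{1..<k}. d i \<nu>))"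
    using REP_add[OF REP_P R1] less.prems unfolding ind_def by simp
  have "(\<Sum>i\<in>{1..k}. P i * H (k - i)) = P k * H (k - k) + (\<Sum>i\<in>{1..<k}. P i * H (k - i))"
  proof -
    have "{1..k} = insert k {1..<k}" using less.prems by auto
    thus ?thesis by simp
  qed
  hence eq: "of_nat k * H k = P k + (\<Sum>i\<in>{1..<k}. P i * H (k - i))" by (simp add: newton H0)
  have "H k = sc (1 / of_nat k) * (of_nat k * H k)"
    using less.prems by (simp add: mult.assoc[symmetric] sc_inv_nat)
  hence R3: "REP k (H k) (\<lambda>\<nu>. (1 / of_nat k) * (ind k \<nu> + (\<Sum>i\<in>{1..<k}. d i \<nu>)))"
    using REP_scale[OF R2, of "1 / of_nat k"] eq by simp
  have dnn: "0 \<le> d i \<nu>" if "i \<in> {1..<k}" for i \<nu>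
    unfolding d_def using cf[OF that] by (intro conv_nonneg) (auto simp: ind_def)
  have snn: "0 \<le> (\<Sum>i\<in>{1..<k}. d i \<nu>)" for \<nu> by (intro sum_nonneg dnn)
  show ?case
  proof (intro exI conjI allI)
    show "REP k (H k) (\<lambda>\<nu>. (1 / of_nat k) * (ind k \<nu> + (\<Sum>i\<in>{1..<k}. d i \<nu>)))" by (rule R3)
    fix \<nu> :: "nat multiset"
    show "0 \<le> (1 / of_nat k) * (ind k \<nu> + (\<Sum>i\<in>{1..<k}. d i \<nu>))"
      using snn[of \<nu>] by (intro mult_nonneg_nonneg) (auto simp: ind_def)
  next
    show "0 < (1 / of_nat k) * (ind k {#k#} + (\<Sum>i\<in>{1..<k}. d i {#k#}))"
      using snn[of "{#k#}"] less.prems by (intro mult_pos_pos) (auto simp: ind_def)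
  qed
qed

lemma TR_H: assumes "1 \<le> k" shows "TR k {#k#} (H k)"
proof -
  obtain c where c: "REP k (H k) c" "\<forall>\<nu>. 0 \<le> c \<nu>" "0 < c {#k#}" using H_REP[OF assms] by blast
  have "\<nu> = {#k#} \<or> size {#k#} < size \<nu>" if "\<nu> \<in> PT k" for \<nu>
  proof (cases "size \<nu> = 1")
    case True
    then obtain a where a: "\<nu> = {#a#}" using size_1_singleton_mset by blast
    thus ?thesis using that by (simp add: partitions_def)
  next
    case False
    have "\<nu> \<noteq> {#}" using that assms by (auto simp: partitions_def)
    hence "size \<nu> \<noteq> 0" by simp
    hence "1 < size \<nu>" using False by linarith
    thus ?thesis by simp
  qed
  thus ?thesis unfolding TR_def using c single_PT[of k] assms by auto
qed


lemma TR_hp: assumes "\<forall>x\<in>#\<alpha>. 0 < x" shows "TR (sum_mset \<alpha>) \<alpha> (hp \<alpha>)"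
proof -
  have "TR (\<Sum>x\<in>#\<alpha>. x) (\<Sum>x\<in>#\<alpha>. {#x#}) (\<Prod>x\<in>#\<alpha>. H x)"
    using assms by (intro TR_prod_mset TR_H) auto
  thus ?thesis by (simp add: hp_def)
qed



definition orbs :: "nat \<Rightarrow> (nat \<Rightarrow> nat) \<Rightarrow> nat set set" where
  "orbs n g = {orbit g x | x. x < n}"

lemma cycle_type_orbs: "cycle_type n g = image_mset card (mset_set (orbs n g))"
  by (simp add: cycle_type_def orbs_def)

lemma finite_orbs: "finite (orbs n g)"
proof -
  have "orbs n g = (\<lambda>x. orbit g x) ` {..<n}" by (auto simp: orbs_def)
  thus ?thesis by simp
qed

lemma size_cycle_type: "size (cycle_type n g) = card (orbs n g)"
  by (simp add: cycle_type_orbs)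

context
  fixes n :: nat and g :: "nat \<Rightarrow> nat"
  assumes perm: "g permutes {..<n}"
begin

lemma g_permutation: "permutation g"
  using perm by (intro permutes_imp_permutation[of "{..<n}"]) auto

lemma self_orb: "x \<in> orbit g x"
  by (rule permutation_self_in_orbit[OF g_permutation])

lemma orbit_sub: assumes "x < n" shows "orbit g x \<subseteq> {..<n}"
proof
  fix y assume "y \<in> orbit g x"
  then obtain k where "y = (g ^^ k) x" using orbit_altdef_permutation[OF g_permutation] by blast
  moreover have p: "(g ^^ k) permutes {..<n}" by (rule permutes_funpow[OF perm])
  ultimately show "y \<in> {..<n}" using assms permutes_in_image[OF p, of x] by simp
qed

lemma orbit_eq: assumes "y \<in> orbit g x" shows "orbit g y = orbit g x"
proof
  show "orbit g y \<subseteq> orbit g x"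
  proof
    fix z assume "z \<in> orbit g y" thus "z \<in> orbit g x" using assms by (rule orbit_trans)
  qed
  have xy: "x \<in> orbit g y" by (rule orbit_swap[OF self_orb assms])
  show "orbit g x \<subseteq> orbit g y"
  proof
    fix z assume "z \<in> orbit g x" thus "z \<in> orbit g y" using xy by (rule orbit_trans)
  qed
qed

lemma finite_orbit': "finite (orbit g x)"
  by (rule finite_orbit[OF self_orb])

lemma cycle_type_PT: "cycle_type n g \<in> PT n"
proof -
  have disj: "pairwise disjnt (orbs n g)"
  proof (rule pairwiseI)
    fix A B assume "A \<in> orbs n g" "B \<in> orbs n g" "A \<noteq> B"
    then obtain x y where A: "A = orbit g x" and B: "B = orbit g y" by (auto simp: orbs_def)
    show "disjnt A B"
    proof (rule ccontr)
      assume "\<not> disjnt A B"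
      then obtain z where "z \<in> orbit g x" "z \<in> orbit g y" unfolding disjnt_def A B by blast
      hence "orbit g z = orbit g x" "orbit g z = orbit g y" using orbit_eq by blast+
      hence "orbit g x = orbit g y" by simp
      thus False using \<open>A \<noteq> B\<close> A B by simp
    qed
  qed
  have U: "\<Union>(orbs n g) = {..<n}"
  proof
    show "\<Union>(orbs n g) \<subseteq> {..<n}" using orbit_sub by (auto simp: orbs_def)
    show "{..<n} \<subseteq> \<Union>(orbs n g)" using self_orb by (auto simp: orbs_def)
  qed
  have "sum card (orbs n g) = card (\<Union>(orbs n g))"
    by (rule card_Union_disjoint[OF disj, symmetric]) (auto simp: orbs_def finite_orbit')
  hence s: "sum card (orbs n g) = n" using U by simp
  have pos: "\<forall>x\<in>#cycle_type n g. 0 < x"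
  proof
    fix c assume "c \<in># cycle_type n g"
    then obtain x where "c = card (orbit g x)"
      by (auto simp: cycle_type_orbs finite_orbs orbs_def)
    moreover have "orbit g x \<noteq> {}" using self_orb by blast
    ultimately show "0 < c" using finite_orbit'[of x] by (simp add: card_gt_0_iff)
  qed
  have "sum_mset (cycle_type n g) = n"
    using s by (simp add: cycle_type_orbs sum_unfold_sum_mset)
  thus ?thesis using pos by (simp add: partitions_def)
qed

end

lemma power_refines:
  assumes perm: "\<sigma> permutes {..<n}"
  shows "card (orbs n \<sigma>) \<le> card (orbs n (\<sigma> ^^ k)) \<and>
         (card (orbs n (\<sigma> ^^ k)) = card (orbs n \<sigma>) \<longrightarrow> orbs n (\<sigma> ^^ k) = orbs n \<sigma>)"
proof -
  let ?g = "\<sigma> ^^ k"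
  have gperm: "?g permutes {..<n}" by (rule permutes_funpow[OF perm])
  have sp: "permutation \<sigma>" by (rule g_permutation[OF perm])
  have sub: "orbit ?g x \<subseteq> orbit \<sigma> x" for x
  proof
    fix y assume "y \<in> orbit ?g x"
    then obtain j where "y = (?g ^^ j) x" using orbit_altdef_permutation[OF g_permutation[OF gperm]] by blast
    hence "y = (\<sigma> ^^ (k * j)) x" by (simp add: funpow_mult)
    thus "y \<in> orbit \<sigma> x" using orbit_altdef_permutation[OF sp] by blast
  qed
  define f where "f Q = (\<Union>y\<in>Q. orbit \<sigma> y)" for Q
  have fo: "f (orbit ?g x) = orbit \<sigma> x" for x
  proof -
    have "orbit \<sigma> y = orbit \<sigma> x" if "y \<in> orbit ?g x" for y
      using sub that by (intro orbit_eq[OF perm]) blast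
    thus ?thesis unfolding f_def using self_orb[OF gperm, of x] by blast
  qed
  have img: "f ` orbs n ?g = orbs n \<sigma>"
    unfolding orbs_def using fo by (auto simp: image_iff) 
  have le: "card (orbs n \<sigma>) \<le> card (orbs n ?g)"
    unfolding img[symmetric] by (rule card_image_le[OF finite_orbs])
  have "orbs n ?g = orbs n \<sigma>" if eq: "card (orbs n ?g) = card (orbs n \<sigma>)"
  proof -
    have inj: "inj_on f (orbs n ?g)"
      using eq img by (intro eq_card_imp_inj_on[OF finite_orbs]) simp
    have "orbit ?g x = orbit \<sigma> x" if x: "x < n" for x
    proof
      show "orbit ?g x \<subseteq> orbit \<sigma> x" by (rule sub)
      show "orbit \<sigma> x \<subseteq> orbit ?g x"
      proof
        fix y assume y: "y \<in> orbit \<sigma> x"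
        have yn: "y < n" using orbit_sub[OF perm x] y by auto
        have "f (orbit ?g y) = f (orbit ?g x)" using fo orbit_eq[OF perm y] by simp
        moreover have "orbit ?g y \<in> orbs n ?g" "orbit ?g x \<in> orbs n ?g" using x yn by (auto simp: orbs_def)
        ultimately have "orbit ?g y = orbit ?g x" using inj by (simp add: inj_on_def)
        thus "y \<in> orbit ?g x" using self_orb[OF gperm, of y] by simp
      qed
    qed
    thus ?thesis by (auto simp: orbs_def)
  qed
  thus ?thesis using le by blast
qed



lemma cyc_orbit:
  assumes a: "0 < a" and x: "x \<in> {n'..<n'+a}"
  shows "orbit (cycle_of_list [n'..<n'+a]) x = {n'..<n'+a}"
proof -
  let ?cs = "[n'..<n'+a]" let ?c = "cycle_of_list ?cs"
  have cp: "permutation ?c" by (rule permutation_of_cycle)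
  have rot: "(?c ^^ k) (?cs ! i) = ?cs ! ((k + i) mod a)" if "i < a" for k i
  proof -
    have "(?c ^^ k) (?cs ! i) = map (?c ^^ k) ?cs ! i" using that by simp
    also have "\<dots> = rotate k ?cs ! i" by (simp add: cyclic_rotation)
    also have "\<dots> = ?cs ! ((k + i) mod a)" using that by (simp add: nth_rotate)
    finally show ?thesis .
  qed
  define i where "i = x - n'"
  have i: "i < a" "x = ?cs ! i" using x by (auto simp: i_def)
  show ?thesis
  proof
    show "orbit ?c x \<subseteq> {n'..<n'+a}"
    proof
      fix y assume "y \<in> orbit ?c x"
      then obtain k where "y = (?c ^^ k) x" using orbit_altdef_permutation[OF cp] by blast
      hence "y = ?cs ! ((k + i) mod a)" using rot i by simp
      moreover have "(k + i) mod a < a" using a by simp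
      ultimately show "y \<in> {n'..<n'+a}" by simp
    qed
    show "{n'..<n'+a} \<subseteq> orbit ?c x"
    proof
      fix y assume y: "y \<in> {n'..<n'+a}"
      define j where "j = y - n'"
      have j: "j < a" "y = ?cs ! j" using y by (auto simp: j_def)
      have "(?c ^^ (j + a - i)) x = ?cs ! ((j + a - i + i) mod a)" using rot i by simp
      also have "(j + a - i + i) mod a = j" using i j by simp
      finally have "(?c ^^ (j + a - i)) x = y" using j by simp
      thus "y \<in> orbit ?c x" using orbit_altdef_permutation[OF cp] by blast
    qed
  qed
qed

lemma exists_perm:
  "(\<forall>x\<in>#\<beta>. 0 < x) \<Longrightarrow> \<exists>\<sigma>. \<sigma> permutes {..<sum_mset \<beta>} \<and> cycle_type (sum_mset \<beta>) \<sigma> = \<beta>"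
proof (induction \<beta>)
  case empty
  have "orbs 0 id = {}" by (simp add: orbs_def)
  hence "cycle_type 0 id = {#}" unfolding cycle_type_orbs by simp
  hence 1: "cycle_type (sum_mset {#}) id = ({#}::nat multiset)" by simp
  have 2: "id permutes {..<sum_mset ({#}::nat multiset)}" by (rule permutes_id)
  show ?case using 1 2 by blast
next
  case (add a \<beta>)
  define n' where "n' = sum_mset \<beta>"
  from add obtain \<sigma>' where s': "\<sigma>' permutes {..<n'}" "cycle_type n' \<sigma>' = \<beta>" unfolding n'_def by auto
  have a: "0 < a" using add.prems by simp
  let ?cs = "[n'..<n'+a]" let ?c = "cycle_of_list ?cs"
  define \<sigma> where "\<sigma> = \<sigma>' \<circ> ?c"
  define N where "N = a + n'"
  have cperm: "?c permutes {n'..<n'+a}" using cycle_permutes[of ?cs] by simp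
  have sperm: "\<sigma> permutes {..<N}" unfolding \<sigma>_def
    by (rule permutes_compose; rule permutes_subset[OF cperm] permutes_subset[OF s'(1)]) (auto simp: N_def)
  have low: "\<sigma> x = \<sigma>' x" if "x < n'" for x
    using that by (simp add: \<sigma>_def id_outside_supp)
  have high: "\<sigma> x = ?c x" if "n' \<le> x" for x
  proof -
    have "n' \<le> ?c x"
    proof (cases "x < n' + a")
      case True thus ?thesis using permutes_in_image[OF cperm, of x] that by simp
    next
      case False thus ?thesis using that by (simp add: id_outside_supp)
    qed
    thus ?thesis by (simp add: \<sigma>_def permutes_not_in[OF s'(1)])
  qed
  have orb_low: "orbit \<sigma> x = orbit \<sigma>' x" if "x < n'" for x
  proof (rule orbit_cong0[of x "{..<n'}"])
    show "x \<in> {..<n'}" using that by simp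
    show "\<sigma> \<in> {..<n'} \<rightarrow> {..<n'}" using low permutes_in_image[OF s'(1)] by auto
    show "\<And>y. y \<in> {..<n'} \<Longrightarrow> \<sigma> y = \<sigma>' y" using low by simp
  qed
  have orb_high: "orbit \<sigma> x = {n'..<n'+a}" if "x \<in> {n'..<n'+a}" for x
  proof -
    have "orbit ?c x = orbit \<sigma> x"
    proof (rule orbit_cong0[of x "{n'..<n'+a}"])
      show "x \<in> {n'..<n'+a}" by (rule that)
      show "?c \<in> {n'..<n'+a} \<rightarrow> {n'..<n'+a}" using permutes_in_image[OF cperm] by auto
      show "\<And>y. y \<in> {n'..<n'+a} \<Longrightarrow> ?c y = \<sigma> y" using high by simp
    qed
    thus ?thesis using cyc_orbit[OF a that] by simp
  qed
  have O: "orbs N \<sigma> = insert {n'..<n'+a} (orbs n' \<sigma>')"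
  proof
    show "orbs N \<sigma> \<subseteq> insert {n'..<n'+a} (orbs n' \<sigma>')"
    proof
      fix Q assume "Q \<in> orbs N \<sigma>"
      then obtain x where x: "x < N" "Q = orbit \<sigma> x" by (auto simp: orbs_def)
      show "Q \<in> insert {n'..<n'+a} (orbs n' \<sigma>')"
      proof (cases "x < n'")
        case True thus ?thesis using x orb_low by (auto simp: orbs_def)
      next
        case False thus ?thesis using x orb_high by (simp add: N_def)
      qed
    qed
    show "insert {n'..<n'+a} (orbs n' \<sigma>') \<subseteq> orbs N \<sigma>"
    proof
      fix Q assume "Q \<in> insert {n'..<n'+a} (orbs n' \<sigma>')"
      thus "Q \<in> orbs N \<sigma>"
      proof
        assume "Q = {n'..<n'+a}"
        hence "Q = orbit \<sigma> n'" using orb_high[of n'] a by simp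
        moreover have "n' < N" using a by (simp add: N_def)
        ultimately show ?thesis by (auto simp: orbs_def)
      next
        assume "Q \<in> orbs n' \<sigma>'"
        then obtain x where "x < n'" "Q = orbit \<sigma>' x" by (auto simp: orbs_def)
        thus ?thesis using orb_low[of x] by (auto simp: orbs_def N_def)
      qed
    qed
  qed
  have notin: "{n'..<n'+a} \<notin> orbs n' \<sigma>'"
  proof
    assume "{n'..<n'+a} \<in> orbs n' \<sigma>'"
    then obtain x where "x < n'" "{n'..<n'+a} = orbit \<sigma>' x" by (auto simp: orbs_def)
    hence sb: "{n'..<n'+a} \<subseteq> {..<n'}" using orbit_sub[OF s'(1)] by blast
    have "n' \<in> {n'..<n'+a}" using a by simp
    hence "n' \<in> {..<n'}" using sb by (rule rev_subsetD)
    thus False by simp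
  qed
  have "cycle_type N \<sigma> = add_mset a \<beta>"
    unfolding cycle_type_orbs O using notin finite_orbs[of n' \<sigma>'] s'(2)
    by (simp add: cycle_type_orbs)
  thus ?case using sperm by (intro exI[of _ \<sigma>]) (simp add: N_def n'_def)
qed

lemma sig_prop:
  assumes "\<alpha> \<in> PT n"
  shows "sig \<alpha> permutes {..<sum_mset \<alpha>} \<and> cycle_type (sum_mset \<alpha>) (sig \<alpha>) = \<alpha>"
proof -
  have "\<exists>\<sigma>. \<sigma> permutes {0..<sum_mset \<alpha>} \<and> cycle_type (sum_mset \<alpha>) \<sigma> = \<alpha>"
    using exists_perm[of \<alpha>] assms by (simp add: partitions_def atLeast0LessThan)
  hence "sig \<alpha> permutes {0..<sum_mset \<alpha>} \<and> cycle_type (sum_mset \<alpha>) (sig \<alpha>) = \<alpha>"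
    unfolding sig_def by (rule someI_ex)
  thus ?thesis by (simp add: atLeast0LessThan)
qed

lemma TR_CC:
  assumes "\<alpha> \<in> PT n"
  shows "TR n \<alpha> (CC \<alpha>)"
proof -
  have n: "n = sum_mset \<alpha>" using assms by (simp add: partitions_def)
  let ?s = "sig \<alpha>"
  have sp: "?s permutes {..<n}" "cycle_type n ?s = \<alpha>" using sig_prop[OF assms] n by auto
  have G: "Gs \<alpha> = {?s ^^ k | k. True}" by (simp add: Gs_def)
  have fin: "finite (Gs \<alpha>)"
  proof (rule finite_subset)
    show "Gs \<alpha> \<subseteq> {p. p permutes {..<n}}" using permutes_funpow[OF sp(1)] G by auto
    show "finite {p. p permutes {..<n}}" by (rule finite_permutations) simp
  qed
  have s_in: "?s \<in> Gs \<alpha>" unfolding G by (intro CollectI exI[of _ 1]) simp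
  hence cpos: "0 < card (Gs \<alpha>)" using fin by (auto simp: card_gt_0_iff)
  have "TR n \<alpha> (\<Sum>g\<in>Gs \<alpha>. sc (1 / of_nat (card (Gs \<alpha>))) * pp (cycle_type n g))"
  proof (rule TR_intro[OF fin, where tz = ?s])
    fix g assume "g \<in> Gs \<alpha>"
    then obtain k where k: "g = ?s ^^ k" unfolding G by blast
    show "cycle_type n g \<in> PT n" unfolding k by (rule cycle_type_PT[OF permutes_funpow[OF sp(1)]])
    show "0 \<le> 1 / rat_of_nat (card (Gs \<alpha>))" by simp
    have pr: "card (orbs n ?s) \<le> card (orbs n g) \<and> (card (orbs n g) = card (orbs n ?s) \<longrightarrow> orbs n g = orbs n ?s)"
      unfolding k by (rule power_refines[OF sp(1)])
    show "cycle_type n g = \<alpha> \<or> size \<alpha> < size (cycle_type n g)"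
    proof (cases "card (orbs n g) = card (orbs n ?s)")
      case True
      hence "orbs n g = orbs n ?s" using pr by blast
      hence "cycle_type n g = cycle_type n ?s" by (simp add: cycle_type_orbs)
      thus ?thesis using sp by simp
    next
      case False
      hence "card (orbs n ?s) < card (orbs n g)" using pr by linarith
      thus ?thesis using sp(2) by (auto simp: size_cycle_type[symmetric])
    qed
  next
    show "?s \<in> Gs \<alpha>" by (rule s_in)
    show "0 < 1 / rat_of_nat (card (Gs \<alpha>))" using cpos by simp
    show "cycle_type n ?s = \<alpha>" by (rule sp(2))
  qed
  thus ?thesis by (simp add: CC_def n)
qed

lemma sum_replicate_count: "(\<Sum>i\<in>set_mset \<alpha>. replicate_mset (count \<alpha> i) i) = \<alpha>"
proof (rule multiset_eqI)
  fix x
  have "count (\<Sum>i\<in>set_mset \<alpha>. replicate_mset (count \<alpha> i) i) x = (\<Sum>i\<in>set_mset \<alpha>. if x = i then count \<alpha> i else 0)"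
    by (simp add: count_sum)
  also have "\<dots> = count \<alpha> x" by (simp add: count_eq_zero_iff)
  finally show "count (\<Sum>i\<in>set_mset \<alpha>. replicate_mset (count \<alpha> i) i) x = count \<alpha> x" .
qed

lemma TR_n: "TR n \<alpha> x \<Longrightarrow> n = sum_mset \<alpha>"
  by (simp add: TR_def partitions_def)

lemma TR_KK:
  assumes "\<alpha> \<in> PT n"
  shows "TR n \<alpha> (KK \<alpha>)"
proof -
  let ?b = "\<lambda>i. replicate_mset (count \<alpha> i) i"
  have "TR (\<Sum>i\<in>set_mset \<alpha>. sum_mset (?b i)) (\<Sum>i\<in>set_mset \<alpha>. ?b i) (\<Prod>i\<in>set_mset \<alpha>. CC (?b i))"
  proof (rule TR_prod_set)
    fix i assume i: "i \<in> set_mset \<alpha>"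
    hence "0 < i" using assms by (auto simp: partitions_def)
    hence "?b i \<in> PT (sum_mset (?b i))" by (simp add: partitions_def)
    thus "TR (sum_mset (?b i)) (?b i) (CC (?b i))" by (rule TR_CC)
  qed simp
  hence T: "TR (\<Sum>i\<in>set_mset \<alpha>. sum_mset (?b i)) \<alpha> (KK \<alpha>)" by (simp add: sum_replicate_count KK_def)
  have "(\<Sum>i\<in>set_mset \<alpha>. sum_mset (?b i)) = sum_mset \<alpha>" using TR_n[OF T] by simp
  also have "\<dots> = n" using assms by (simp add: partitions_def)
  finally show ?thesis using T by simp
qed



definition vals :: "mono \<Rightarrow> nat multiset" where
  "vals m = image_mset m (mset_set {i. m i \<noteq> 0})"

definition mnf :: "nat multiset \<Rightarrow> mono" where
  "mnf \<beta> = (\<lambda>i. if i < size \<beta> then sorted_list_of_multiset \<beta> ! i else 0)"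

definition msf :: "nat multiset \<Rightarrow> sfun" where
  "msf \<beta> m = (if fin_mono m \<and> vals m = \<beta> then 1 else 0)"

lemma extend_bij:
  fixes g :: "'a \<Rightarrow> 'a"
  assumes fA: "finite A" and fB: "finite B" and g: "bij_betw g A B"
  shows "\<exists>\<sigma>. bij \<sigma> \<and> (\<forall>x\<in>A. \<sigma> x = g x)"
proof -
  let ?F = "A \<union> B"
  have fF: "finite ?F" using fA fB by simp
  have cAB: "card A = card B" using g by (rule bij_betw_same_card)
  have "card (?F - A) = card (?F - B)"
    using fF cAB by (simp add: card_Diff_subset fA fB)
  then obtain h where h: "bij_betw h (?F - A) (?F - B)"
    using finite_same_card_bij[of "?F - A" "?F - B"] fF by auto
  define \<sigma> where "\<sigma> x = (if x \<in> A then g x else if x \<in> ?F then h x else x)" for x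
  have b1: "bij_betw \<sigma> A B" using g by (rule bij_betw_cong[THEN iffD1, rotated]) (simp add: \<sigma>_def)
  have b2: "bij_betw \<sigma> (?F - A) (?F - B)" using h by (rule bij_betw_cong[THEN iffD1, rotated]) (auto simp: \<sigma>_def)
  have "bij_betw \<sigma> (A \<union> (?F - A)) (B \<union> (?F - B))" by (rule bij_betw_combine[OF b1 b2]) auto
  moreover have "A \<union> (?F - A) = ?F" "B \<union> (?F - B) = ?F" by auto
  ultimately have "bij_betw \<sigma> ?F ?F" by simp
  moreover have "\<And>x. x \<notin> ?F \<Longrightarrow> \<sigma> x = x" by (simp add: \<sigma>_def)
  ultimately have "\<sigma> permutes ?F" by (rule bij_imp_permutes)
  hence "bij \<sigma>" by (rule permutes_bij)
  thus ?thesis by (auto simp: \<sigma>_def)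
qed

lemma fin_supp: "fin_mono m \<Longrightarrow> finite {i. m i \<noteq> 0}" by (simp add: fin_mono_def)

lemma size_vals: "size (vals m) = card {i. m i \<noteq> 0}" by (simp add: vals_def)

lemma mnf_props:
  assumes pos: "\<forall>x\<in>#\<beta>. 0 < x"
  shows "fin_mono (mnf \<beta>)" "vals (mnf \<beta>) = \<beta>" "{i. mnf \<beta> i \<noteq> 0} = {..<size \<beta>}"
proof -
  let ?xs = "sorted_list_of_multiset \<beta>"
  have len: "length ?xs = size \<beta>" by (metis mset_sorted_list_of_multiset size_mset)
  have S: "{i. mnf \<beta> i \<noteq> 0} = {..<size \<beta>}"
  proof
    show "{i. mnf \<beta> i \<noteq> 0} \<subseteq> {..<size \<beta>}" by (auto simp: mnf_def split: if_splits)
    show "{..<size \<beta>} \<subseteq> {i. mnf \<beta> i \<noteq> 0}"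
    proof
      fix i assume i: "i \<in> {..<size \<beta>}"
      hence "?xs ! i \<in> set ?xs" using len by (intro nth_mem) simp
      hence "?xs ! i \<in># \<beta>" by simp
      hence "0 < ?xs ! i" using pos by blast
      thus "i \<in> {i. mnf \<beta> i \<noteq> 0}" using i by (simp add: mnf_def)
    qed
  qed
  thus "{i. mnf \<beta> i \<noteq> 0} = {..<size \<beta>}" .
  show "fin_mono (mnf \<beta>)" using S by (simp add: fin_mono_def)
  have "vals (mnf \<beta>) = image_mset (mnf \<beta>) (mset [0..<size \<beta>])"
    using S by (simp add: vals_def atLeast0LessThan)
  also have "\<dots> = mset (map (mnf \<beta>) [0..<size \<beta>])" by simp
  also have "map (mnf \<beta>) [0..<size \<beta>] = map (\<lambda>i. ?xs ! i) [0..<length ?xs]"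
    using len by (intro map_cong) (auto simp: mnf_def)
  also have "\<dots> = ?xs" by (rule map_nth)
  finally show "vals (mnf \<beta>) = \<beta>" by simp
qed

lemma vals_pos: "x \<in># vals m \<Longrightarrow> 0 < x"
proof -
  assume "x \<in># vals m"
  then obtain i where i: "i \<in># mset_set {i. m i \<noteq> 0}" "x = m i" by (auto simp: vals_def)
  have "finite {i. m i \<noteq> 0}" using i(1) by (cases "finite {i. m i \<noteq> 0}") auto
  hence "m i \<noteq> 0" using i(1) by simp
  thus "0 < x" using i(2) by simp
qed



lemma Lambda_sym: "f \<in> Lambda n \<Longrightarrow> bij \<sigma> \<Longrightarrow> f (m \<circ> \<sigma>) = f m"
  by (simp add: Lambda_def)

lemma Lambda_supp: "f \<in> Lambda n \<Longrightarrow> f m \<noteq> 0 \<Longrightarrow> fin_mono m \<and> mdeg m = n"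
  by (simp add: Lambda_def)

lemma sym_vals:
  assumes f: "f \<in> Lambda n" and fin: "fin_mono m"
  shows "f m = f (mnf (vals m))"
proof -
  define S0 where "S0 = {i. m i \<noteq> 0}"
  have fS: "finite S0" using fin by (simp add: S0_def fin_mono_def)
  define ls where "ls = sorted_list_of_set S0"
  have ls: "distinct ls" "set ls = S0" using fS by (auto simp: ls_def)
  define ys where "ys = map m ls"
  have "mset ys = image_mset m (mset ls)" by (simp add: ys_def)
  also have "mset ls = mset_set S0" using ls mset_set_set[of ls] by simp
  also have "image_mset m (mset_set S0) = vals m" by (simp add: vals_def S0_def)
  finally have mys: "mset ys = vals m" .
  define xs where "xs = sorted_list_of_multiset (vals m)"
  have "mset xs = mset ys" using mys by (simp add: xs_def)
  then obtain p where p: "p permutes {..<length ys}" "permute_list p ys = xs"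
    by (rule mset_eq_permutation)
  define k where "k = length ys"
  have kS: "k = card S0" using ls by (simp add: k_def ys_def distinct_card[symmetric])
  have ksz: "k = size (vals m)" using mys by (simp add: k_def size_mset[symmetric] del: size_mset)
  define g where "g i = ls ! (p i)" for i
  have gb: "bij_betw g {..<k} S0"
  proof -
    have "bij_betw p {..<k} {..<k}" using p(1) by (simp add: k_def permutes_imp_bij)
    moreover have "bij_betw ((!) ls) {..<k} S0" using ls by (intro bij_betw_nth) (auto simp: k_def ys_def)
    ultimately have "bij_betw ((!) ls \<circ> p) {..<k} S0" by (rule bij_betw_trans)
    thus ?thesis by (simp add: g_def[abs_def] comp_def)
  qed
  obtain \<sigma> where s: "bij \<sigma>" "\<forall>x\<in>{..<k}. \<sigma> x = g x"
    using extend_bij[OF _ fS gb] by auto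
  have img: "\<sigma> ` {..<k} = S0" using s gb by (simp add: bij_betw_def)
  have "m \<circ> \<sigma> = mnf (vals m)"
  proof
    fix i
    show "(m \<circ> \<sigma>) i = mnf (vals m) i"
    proof (cases "i < k")
      case True
      have "(m \<circ> \<sigma>) i = m (ls ! (p i))" using s True by (simp add: g_def)
      also have "\<dots> = ys ! (p i)"
      proof -
        have "p i < length ls" using permutes_in_image[OF p(1), of i] True by (simp add: k_def ys_def)
        thus ?thesis by (simp add: ys_def)
      qed
      also have "\<dots> = permute_list p ys ! i" using True p(1) by (simp add: permute_list_nth k_def)
      also have "\<dots> = xs ! i" using p(2) by simp
      also have "\<dots> = mnf (vals m) i" using True ksz by (simp add: mnf_def xs_def)
      finally show ?thesis .
    next
      case False
      have "\<sigma> i \<notin> \<sigma> ` {..<k}" using False bij_is_inj[OF s(1)] by (auto simp: inj_eq)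
      hence "\<sigma> i \<notin> S0" using img by simp
      hence "m (\<sigma> i) = 0" by (simp add: S0_def)
      thus ?thesis using False ksz by (simp add: mnf_def)
    qed
  qed
  thus ?thesis using Lambda_sym[OF f s(1), of m] by simp
qed

lemma vals_comp:
  assumes "bij \<sigma>"
  shows "vals (m \<circ> \<sigma>) = vals m" "fin_mono (m \<circ> \<sigma>) = fin_mono m"
proof -
  let ?S = "{i. m i \<noteq> 0}"
  have v: "{i. (m \<circ> \<sigma>) i \<noteq> 0} = \<sigma> -` ?S" by auto
  have inj: "inj \<sigma>" using assms by (rule bij_is_inj)
  have r: "range \<sigma> = UNIV" using assms by (rule bij_is_surj)
  have im: "\<sigma> ` (\<sigma> -` ?S) = ?S" by (simp only: image_vimage_eq r Int_UNIV_right)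
  have "vals (m \<circ> \<sigma>) = image_mset m (image_mset \<sigma> (mset_set (\<sigma> -` ?S)))"
    by (simp add: vals_def v image_mset.compositionality)
  also have "image_mset \<sigma> (mset_set (\<sigma> -` ?S)) = mset_set ?S"
    using inj im by (subst image_mset_mset_set) (auto intro: inj_on_subset)
  finally show "vals (m \<circ> \<sigma>) = vals m" by (simp add: vals_def comp_def)
  have "finite (\<sigma> -` ?S) = finite ?S"
  proof
    assume "finite (\<sigma> -` ?S)" hence "finite (\<sigma> ` (\<sigma> -` ?S))" by simp
    thus "finite ?S" using im by simp
  next
    assume "finite ?S" thus "finite (\<sigma> -` ?S)" using inj by (rule finite_vimageI)
  qed
  thus "fin_mono (m \<circ> \<sigma>) = fin_mono m" by (simp add: fin_mono_def v[unfolded comp_def])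
qed

lemma sum_vals: "fin_mono m \<Longrightarrow> sum_mset (vals m) = mdeg m"
  by (simp add: vals_def mdeg_def sum_unfold_sum_mset)

lemma vals_PT: "fin_mono m \<Longrightarrow> vals m \<in> PT (mdeg m)"
  using vals_pos sum_vals by (auto simp: partitions_def)

lemma PT_pos: "\<alpha> \<in> PT n \<Longrightarrow> \<forall>x\<in>#\<alpha>. 0 < x"
  by (simp add: partitions_def)

lemma msf_in: assumes b: "\<beta> \<in> PT n" shows "msf \<beta> \<in> Lambda n"
  unfolding Lambda_def mem_Collect_eq
proof (rule conjI; intro allI impI)
  fix m assume "msf \<beta> m \<noteq> 0"
  hence "fin_mono m" "vals m = \<beta>" by (auto simp: msf_def split: if_splits)
  thus "fin_mono m \<and> mdeg m = n" using b sum_vals by (auto simp: partitions_def)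
next
  fix \<sigma> :: "nat \<Rightarrow> nat" and m assume "bij \<sigma>"
  thus "msf \<beta> (m \<circ> \<sigma>) = msf \<beta> m" by (simp add: msf_def vals_comp)
qed

lemma msf_mnf: "\<alpha> \<in> PT n' \<Longrightarrow> msf \<beta> (mnf \<alpha>) = (if \<beta> = \<alpha> then 1 else 0)"
  using mnf_props[OF PT_pos] by (auto simp: msf_def)

lemma msf_expand:
  assumes f: "f \<in> Lambda n"
  shows "f m = (\<Sum>\<beta>\<in>PT n. f (mnf \<beta>) * msf \<beta> m)"
proof (cases "fin_mono m \<and> mdeg m = n")
  case True
  hence vp: "vals m \<in> PT n" using vals_PT by auto
  have "(\<Sum>\<beta>\<in>PT n. f (mnf \<beta>) * msf \<beta> m) = (\<Sum>\<beta>\<in>PT n. if \<beta> = vals m then f (mnf \<beta>) else 0)"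
    using True by (intro sum.cong) (auto simp: msf_def)
  also have "\<dots> = f (mnf (vals m))" using vp finite_PT by simp
  also have "\<dots> = f m" using sym_vals[OF f] True by simp
  finally show ?thesis by simp
next
  case False
  hence "f m = 0" using Lambda_supp[OF f] by blast
  moreover have "msf \<beta> m = 0" if "\<beta> \<in> PT n" for \<beta>
  proof (rule ccontr)
    assume "msf \<beta> m \<noteq> 0"
    hence "fin_mono m" "vals m = \<beta>" by (auto simp: msf_def split: if_splits)
    thus False using False that sum_vals by (auto simp: partitions_def)
  qed
  ultimately show ?thesis by simp
qed

lemma msf_basis: "is_basis_Lambda n msf"
  unfolding is_basis_Lambda_def
proof (intro conjI ballI allI impI)
  fix \<alpha> assume "\<alpha> \<in> PT n" thus "msf \<alpha> \<in> Lambda n" by (rule msf_in)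
next
  fix c assume z: "\<forall>m. (\<Sum>\<alpha>\<in>PT n. c \<alpha> * msf \<alpha> m) = 0"
  fix \<alpha> assume a: "\<alpha> \<in> PT n"
  have "0 = (\<Sum>\<beta>\<in>PT n. c \<beta> * msf \<beta> (mnf \<alpha>))" using z by simp
  also have "\<dots> = (\<Sum>\<beta>\<in>PT n. if \<beta> = \<alpha> then c \<beta> else 0)"
    using a by (intro sum.cong) (auto simp: msf_mnf)
  also have "\<dots> = c \<alpha>" using a finite_PT by simp
  finally show "c \<alpha> = 0" by simp
next
  fix f assume "f \<in> Lambda n"
  show "\<exists>c. \<forall>m. f m = (\<Sum>\<alpha>\<in>PT n. c \<alpha> * msf \<alpha> m)"
    by (rule exI[of _ "\<lambda>\<beta>. f (mnf \<beta>)"], rule allI, rule msf_expand[OF \<open>f \<in> Lambda n\<close>])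
qed



lemma Lambda_lincomb:
  assumes "finite I" "\<And>i. i \<in> I \<Longrightarrow> e i \<in> Lambda n"
  shows "(\<lambda>m. \<Sum>i\<in>I. c i * e i m) \<in> Lambda n"
  unfolding Lambda_def mem_Collect_eq
proof (rule conjI; intro allI impI)
  fix m assume "(\<Sum>i\<in>I. c i * e i m) \<noteq> 0"
  then obtain i where "i \<in> I" "c i * e i m \<noteq> 0" by (rule sum.not_neutral_contains_not_neutral)
  hence "e i m \<noteq> 0" "e i \<in> Lambda n" using assms by auto
  thus "fin_mono m \<and> mdeg m = n" by (rule Lambda_supp[rotated])
next
  fix \<sigma> :: "nat \<Rightarrow> nat" and m assume "bij \<sigma>"
  show "(\<Sum>i\<in>I. c i * e i (m \<circ> \<sigma>)) = (\<Sum>i\<in>I. c i * e i m)"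
  proof (intro sum.cong refl)
    fix i assume "i \<in> I"
    hence "e i \<in> Lambda n" using assms by auto
    thus "c i * e i (m \<circ> \<sigma>) = c i * e i m" using Lambda_sym \<open>bij \<sigma>\<close> by simp
  qed
qed

definition spanB :: "nat \<Rightarrow> (nat multiset \<Rightarrow> sfun) \<Rightarrow> sfun set" where
  "spanB n b = {f. \<exists>c. \<forall>m. f m = (\<Sum>\<alpha>\<in>PT n. c \<alpha> * b \<alpha> m)}"

lemma spanB_lincomb:
  assumes "finite J" "\<And>j. j \<in> J \<Longrightarrow> g j \<in> spanB n b"
  shows "(\<lambda>m. \<Sum>j\<in>J. w j * g j m) \<in> spanB n b"
proof -
  have "\<forall>j\<in>J. \<exists>c. \<forall>m. g j m = (\<Sum>\<alpha>\<in>PT n. c \<alpha> * b \<alpha> m)" using assms(2) by (auto simp: spanB_def)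
  then obtain C where C: "\<forall>j\<in>J. \<forall>m. g j m = (\<Sum>\<alpha>\<in>PT n. C j \<alpha> * b \<alpha> m)" by (rule bchoice[THEN exE]) blast
  have eqm: "(\<Sum>j\<in>J. w j * g j m) = (\<Sum>\<alpha>\<in>PT n. (\<Sum>j\<in>J. w j * C j \<alpha>) * b \<alpha> m)" for m
  proof -
    have "(\<Sum>j\<in>J. w j * g j m) = (\<Sum>j\<in>J. \<Sum>\<alpha>\<in>PT n. w j * C j \<alpha> * b \<alpha> m)"
      using C by (intro sum.cong) (auto simp: sum_distrib_left mult.assoc)
    also have "\<dots> = (\<Sum>\<alpha>\<in>PT n. \<Sum>j\<in>J. w j * C j \<alpha> * b \<alpha> m)" by (rule sum.swap)
    also have "\<dots> = (\<Sum>\<alpha>\<in>PT n. (\<Sum>j\<in>J. w j * C j \<alpha>) * b \<alpha> m)" by (simp add: sum_distrib_right)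
    finally show ?thesis .
  qed
  show ?thesis unfolding spanB_def mem_Collect_eq
    by (intro exI[of _ "\<lambda>\<alpha>. \<Sum>j\<in>J. w j * C j \<alpha>"] allI) (rule eqm)
qed

lemma spanB_gen: assumes a: "\<alpha> \<in> PT n" shows "b \<alpha> \<in> spanB n b"
proof -
  have bm: "b \<alpha> m = (\<Sum>\<beta>\<in>PT n. (if \<beta> = \<alpha> then 1 else 0) * b \<beta> m)" for m
  proof -
    have "(\<Sum>\<beta>\<in>PT n. (if \<beta> = \<alpha> then 1 else 0) * b \<beta> m) = (\<Sum>\<beta>\<in>PT n. if \<beta> = \<alpha> then b \<beta> m else 0)"
      by (intro sum.cong) auto
    also have "\<dots> = b \<alpha> m" using a finite_PT by simp
    finally show ?thesis by simp
  qed
  show ?thesis unfolding spanB_def mem_Collect_eq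
    by (intro exI[of _ "\<lambda>\<beta>. if \<beta> = \<alpha> then 1 else 0"] allI) (rule bm)
qed

lemma tri_basis:
  fixes r :: "nat multiset \<Rightarrow> nat"
  assumes e: "is_basis_Lambda n e"
    and T: "\<And>\<alpha> m. \<alpha> \<in> PT n \<Longrightarrow> b \<alpha> m = (\<Sum>\<beta>\<in>PT n. T \<alpha> \<beta> * e \<beta> m)"
    and diag: "\<And>\<alpha>. \<alpha> \<in> PT n \<Longrightarrow> T \<alpha> \<alpha> \<noteq> 0"
    and tri: "\<And>\<alpha> \<beta>. \<alpha> \<in> PT n \<Longrightarrow> \<beta> \<in> PT n \<Longrightarrow> T \<alpha> \<beta> \<noteq> 0 \<Longrightarrow> \<beta> = \<alpha> \<or> r \<beta> < r \<alpha>"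
  shows "is_basis_Lambda n b"
proof -
  have eL: "\<And>\<alpha>. \<alpha> \<in> PT n \<Longrightarrow> e \<alpha> \<in> Lambda n" using e by (simp add: is_basis_Lambda_def)
  have eI: "\<And>c. (\<forall>m. (\<Sum>\<alpha>\<in>PT n. c \<alpha> * e \<alpha> m) = 0) \<Longrightarrow> (\<forall>\<alpha>\<in>PT n. c \<alpha> = 0)"
    using e by (simp add: is_basis_Lambda_def)
  have eS: "\<And>f. f \<in> Lambda n \<Longrightarrow> f \<in> spanB n e" using e by (simp add: is_basis_Lambda_def spanB_def)
  have bL: "b \<alpha> \<in> Lambda n" if "\<alpha> \<in> PT n" for \<alpha>
  proof -
    have "b \<alpha> = (\<lambda>m. \<Sum>\<beta>\<in>PT n. T \<alpha> \<beta> * e \<beta> m)" using T[OF that] by (simp add: fun_eq_iff)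
    thus ?thesis using Lambda_lincomb[OF finite_PT eL] by simp
  qed
  have bI: "\<forall>\<alpha>\<in>PT n. c \<alpha> = 0" if z: "\<forall>m. (\<Sum>\<alpha>\<in>PT n. c \<alpha> * b \<alpha> m) = 0" for c
  proof (rule ccontr)
    assume "\<not> (\<forall>\<alpha>\<in>PT n. c \<alpha> = 0)"
    hence ne: "{\<alpha>\<in>PT n. c \<alpha> \<noteq> 0} \<noteq> {}" by auto
    have fz: "finite {\<alpha>\<in>PT n. c \<alpha> \<noteq> 0}" by (simp add: finite_PT)
    let ?Z = "{\<alpha>\<in>PT n. c \<alpha> \<noteq> 0}"
    have "Max (r ` ?Z) \<in> r ` ?Z" using fz ne by (intro Max_in) auto
    then obtain \<alpha>0 where a00: "\<alpha>0 \<in> ?Z" "r \<alpha>0 = Max (r ` ?Z)" by auto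
    have "\<forall>\<alpha>\<in>?Z. r \<alpha> \<le> r \<alpha>0" using a00(2) fz by (simp add: Max_ge)
    hence a0: "\<alpha>0 \<in> ?Z" "\<forall>\<alpha>\<in>?Z. r \<alpha> \<le> r \<alpha>0" using a00 by auto
    define d where "d \<beta> = (\<Sum>\<alpha>\<in>PT n. c \<alpha> * T \<alpha> \<beta>)" for \<beta>
    have "(\<Sum>\<beta>\<in>PT n. d \<beta> * e \<beta> m) = 0" for m
    proof -
      have "(\<Sum>\<beta>\<in>PT n. d \<beta> * e \<beta> m) = (\<Sum>\<beta>\<in>PT n. \<Sum>\<alpha>\<in>PT n. c \<alpha> * T \<alpha> \<beta> * e \<beta> m)"
        by (simp add: d_def sum_distrib_right)
      also have "\<dots> = (\<Sum>\<alpha>\<in>PT n. \<Sum>\<beta>\<in>PT n. c \<alpha> * T \<alpha> \<beta> * e \<beta> m)" by (rule sum.swap)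
      also have "\<dots> = (\<Sum>\<alpha>\<in>PT n. c \<alpha> * b \<alpha> m)"
        by (intro sum.cong refl) (simp add: T sum_distrib_left mult.assoc)
      finally show ?thesis using z by simp
    qed
    hence dz: "d \<alpha>0 = 0" using eI[of d] a0 by blast
    have "d \<alpha>0 = (\<Sum>\<alpha>\<in>PT n. if \<alpha> = \<alpha>0 then c \<alpha>0 * T \<alpha>0 \<alpha>0 else 0)"
      unfolding d_def
    proof (intro sum.cong refl)
      fix \<alpha> assume a: "\<alpha> \<in> PT n"
      show "c \<alpha> * T \<alpha> \<alpha>0 = (if \<alpha> = \<alpha>0 then c \<alpha>0 * T \<alpha>0 \<alpha>0 else 0)"
      proof (cases "\<alpha> = \<alpha>0")
        case False
        show ?thesis
        proof (cases "c \<alpha> = 0 \<or> T \<alpha> \<alpha>0 = 0")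
          case True thus ?thesis using False by auto
        next
          case nz: False
          hence "\<alpha>0 = \<alpha> \<or> r \<alpha>0 < r \<alpha>" using tri[OF a _] a0 by auto
          moreover have "r \<alpha> \<le> r \<alpha>0" using a0 a nz by auto
          ultimately show ?thesis using False by auto
        qed
      qed simp
    qed
    also have "\<dots> = c \<alpha>0 * T \<alpha>0 \<alpha>0" using a0 finite_PT by simp
    finally have "c \<alpha>0 * T \<alpha>0 \<alpha>0 = 0" using dz by simp
    thus False using a0 diag by auto
  qed
  have espan: "e \<beta> \<in> spanB n b" if "\<beta> \<in> PT n" for \<beta>
    using that
  proof (induction "r \<beta>" arbitrary: \<beta> rule: less_induct)
    case less
    let ?J = "{\<gamma>\<in>PT n. \<gamma> \<noteq> \<beta> \<and> T \<beta> \<gamma> \<noteq> 0}"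
    have Jsp: "e \<gamma> \<in> spanB n b" if "\<gamma> \<in> ?J" for \<gamma>
    proof -
      have "r \<gamma> < r \<beta>" using tri[OF less.prems, of \<gamma>] that by auto
      thus ?thesis using less.hyps that by auto
    qed
    have eq: "e \<beta> m = (\<Sum>j\<in>insert \<beta> ?J. (if j = \<beta> then 1 / T \<beta> \<beta> else - T \<beta> j / T \<beta> \<beta>) *
                          (if j = \<beta> then b \<beta> m else e j m))" for m
    proof -
      have "b \<beta> m = (\<Sum>\<gamma>\<in>PT n. T \<beta> \<gamma> * e \<gamma> m)" by (rule T[OF less.prems])
      also have "\<dots> = (\<Sum>\<gamma>\<in>insert \<beta> ?J. T \<beta> \<gamma> * e \<gamma> m)"
        by (rule sum.mono_neutral_right) (auto simp: finite_PT less.prems)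
      also have "\<dots> = T \<beta> \<beta> * e \<beta> m + (\<Sum>\<gamma>\<in>?J. T \<beta> \<gamma> * e \<gamma> m)"
        by (subst sum.insert) (auto simp: finite_PT)
      finally have bb: "b \<beta> m = T \<beta> \<beta> * e \<beta> m + (\<Sum>\<gamma>\<in>?J. T \<beta> \<gamma> * e \<gamma> m)" .
      have "(\<Sum>j\<in>insert \<beta> ?J. (if j = \<beta> then 1 / T \<beta> \<beta> else - T \<beta> j / T \<beta> \<beta>) * (if j = \<beta> then b \<beta> m else e j m))
          = 1 / T \<beta> \<beta> * b \<beta> m + (\<Sum>j\<in>?J. - T \<beta> j / T \<beta> \<beta> * e j m)"
        by (subst sum.insert) (auto simp: finite_PT intro!: sum.cong)
      also have "\<dots> = 1 / T \<beta> \<beta> * (b \<beta> m - (\<Sum>j\<in>?J. T \<beta> j * e j m))"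
        by (simp add: sum_distrib_left sum_negf right_diff_distrib sum_divide_distrib)
      also have "\<dots> = e \<beta> m" using bb diag[OF less.prems] by simp
      finally show ?thesis by simp
    qed
    have "(\<lambda>m. \<Sum>j\<in>insert \<beta> ?J. (if j = \<beta> then 1 / T \<beta> \<beta> else - T \<beta> j / T \<beta> \<beta>) *
                          (if j = \<beta> then b \<beta> m else e j m)) \<in> spanB n b" (is "?F \<in> _")
    proof (rule spanB_lincomb[where g = "\<lambda>j m. if j = \<beta> then b \<beta> m else e j m", simplified])
      show "finite (insert \<beta> ?J)" by (simp add: finite_PT)
      fix j assume j: "j \<in> insert \<beta> ?J"
      show "(\<lambda>m. if j = \<beta> then b \<beta> m else e j m) \<in> spanB n b"
      proof (cases "j = \<beta>")
        case True thus ?thesis using spanB_gen[OF less.prems, of b] by simp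
      next
        case False thus ?thesis using Jsp j by (simp add: eta_contract_eq)
      qed
    qed
    moreover have "e \<beta> = ?F" by (rule ext, rule eq)
    ultimately show ?case by simp
  qed
  have bS: "f \<in> spanB n b" if fL: "f \<in> Lambda n" for f
  proof -
    obtain c where c: "\<forall>m. f m = (\<Sum>\<alpha>\<in>PT n. c \<alpha> * e \<alpha> m)" using eS[OF fL] by (auto simp: spanB_def)
    have "(\<lambda>m. \<Sum>\<alpha>\<in>PT n. c \<alpha> * e \<alpha> m) \<in> spanB n b"
      by (rule spanB_lincomb[OF finite_PT espan])
    moreover have "f = (\<lambda>m. \<Sum>\<alpha>\<in>PT n. c \<alpha> * e \<alpha> m)" using c by auto
    ultimately show ?thesis by simp
  qed
  show ?thesis unfolding is_basis_Lambda_def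
    using bL bI bS by (auto simp: spanB_def)
qed



lemma mdeg_split:
  assumes fin: "fin_mono m" and x: "x \<in> DD m"
  shows "mdeg m = mdeg x + mdeg (msub m x)"
proof -
  let ?F = "supp m"
  have fF: "finite ?F" using fin by (simp add: fin_mono_def supp_def)
  have le: "x i \<le> m i" for i using x by (simp add: DD_def)
  have s1: "supp x \<subseteq> ?F"
  proof
    fix i assume "i \<in> supp x" thus "i \<in> ?F" using le[of i] by (simp add: supp_def)
  qed
  have s2: "supp (msub m x) \<subseteq> ?F" by (auto simp: supp_def msub_def)
  have "mdeg m = (\<Sum>i\<in>?F. m i)" by (rule mdeg_superset[OF fF]) simp
  also have "\<dots> = (\<Sum>i\<in>?F. x i + msub m x i)" using le by (intro sum.cong) (auto simp: msub_def)
  also have "\<dots> = (\<Sum>i\<in>?F. x i) + (\<Sum>i\<in>?F. msub m x i)" by (rule sum.distrib)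
  also have "(\<Sum>i\<in>?F. x i) = mdeg x" by (rule mdeg_superset[OF fF s1, symmetric])
  also have "(\<Sum>i\<in>?F. msub m x i) = mdeg (msub m x)" by (rule mdeg_superset[OF fF s2, symmetric])
  finally show ?thesis .
qed

lemma sf_mult_sym:
  assumes f: "f \<in> Lambda a" and g: "g \<in> Lambda b" and s: "bij \<sigma>"
  shows "sf_mult f g (m \<circ> \<sigma>) = sf_mult f g m"
proof -
  have inj: "inj \<sigma>" using s by (rule bij_is_inj)
  have sur: "surj \<sigma>" using s by (rule bij_is_surj)
  have c1: "\<sigma> (inv \<sigma> l) = l" for l using sur by (rule surj_f_inv_f)
  have c2: "inv \<sigma> (\<sigma> l) = l" for l using inj by (rule inv_f_f)
  show ?thesis unfolding sf_mult_DD
  proof (rule sum.reindex_bij_witness[where j = "\<lambda>a. a \<circ> inv \<sigma>" and i = "\<lambda>b. b \<circ> \<sigma>"])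
    fix x assume x: "x \<in> DD (m \<circ> \<sigma>)"
    show "x \<circ> inv \<sigma> \<circ> \<sigma> = x" by (simp add: fun_eq_iff c2)
    show "x \<circ> inv \<sigma> \<in> DD m" unfolding DD_def
    proof (intro CollectI allI)
      fix l have "x (inv \<sigma> l) \<le> m (\<sigma> (inv \<sigma> l))" using x by (simp add: DD_def)
      thus "(x \<circ> inv \<sigma>) l \<le> m l" by (simp add: c1)
    qed
    have "f (x \<circ> inv \<sigma>) = f (x \<circ> inv \<sigma> \<circ> \<sigma>)" using Lambda_sym[OF f s] by simp
    also have "x \<circ> inv \<sigma> \<circ> \<sigma> = x" by (simp add: fun_eq_iff c2)
    finally have 1: "f (x \<circ> inv \<sigma>) = f x" .
    have "msub (m \<circ> \<sigma>) x = msub m (x \<circ> inv \<sigma>) \<circ> \<sigma>" by (simp add: fun_eq_iff msub_def c2)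
    hence 2: "g (msub (m \<circ> \<sigma>) x) = g (msub m (x \<circ> inv \<sigma>))" using Lambda_sym[OF g s] by simp
    show "f (x \<circ> inv \<sigma>) * g (msub m (x \<circ> inv \<sigma>)) = f x * g (msub (m \<circ> \<sigma>) x)" using 1 2 by simp
  next
    fix y assume y: "y \<in> DD m"
    show "y \<circ> \<sigma> \<circ> inv \<sigma> = y" by (simp add: fun_eq_iff c1)
    show "y \<circ> \<sigma> \<in> DD (m \<circ> \<sigma>)" using y by (simp add: DD_def)
  qed
qed

lemma Lambda_mult:
  assumes f: "f \<in> Lambda a" and g: "g \<in> Lambda b"
  shows "sf_mult f g \<in> Lambda (a + b)"
  unfolding Lambda_def mem_Collect_eq
proof (rule conjI; intro allI impI)
  fix m assume nz: "sf_mult f g m \<noteq> 0"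
  hence fin: "fin_mono m" by (rule sf_mult_valid)
  obtain x where x: "x \<in> DD m" "f x * g (msub m x) \<noteq> 0"
    using nz unfolding sf_mult_DD by (rule sum.not_neutral_contains_not_neutral)
  have "fin_mono x \<and> mdeg x = a" using x(2) Lambda_supp[OF f, of x] by auto
  moreover have "mdeg (msub m x) = b" using x(2) Lambda_supp[OF g, of "msub m x"] by auto
  ultimately show "fin_mono m \<and> mdeg m = a + b" using mdeg_split[OF fin x(1)] fin by simp
next
  fix \<sigma> :: "nat \<Rightarrow> nat" and m assume "bij \<sigma>"
  thus "sf_mult f g (m \<circ> \<sigma>) = sf_mult f g m" by (rule sf_mult_sym[OF f g])
qed

lemma one_Lambda: "sf_one \<in> Lambda 0"
  unfolding Lambda_def mem_Collect_eq
proof (rule conjI; intro allI impI)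
  fix m assume "sf_one m \<noteq> 0"
  hence "\<forall>i. m i = 0" by (simp add: sf_one_def split: if_splits)
  thus "fin_mono m \<and> mdeg m = 0" by (simp add: fin_mono_def mdeg_def)
next
  fix \<sigma> :: "nat \<Rightarrow> nat" and m :: mono assume s: "bij \<sigma>"
  have c1: "\<sigma> (inv \<sigma> l) = l" for l using bij_is_surj[OF s] by (rule surj_f_inv_f)
  have "(\<forall>i. m (\<sigma> i) = 0) = (\<forall>i. m i = 0)"
  proof
    assume a: "\<forall>i. m (\<sigma> i) = 0"
    show "\<forall>i. m i = 0"
    proof
      fix l have "m (\<sigma> (inv \<sigma> l)) = 0" using a by blast
      thus "m l = 0" by (simp add: c1)
    qed
  qed simp
  thus "sf_one (m \<circ> \<sigma>) = sf_one m" by (simp add: sf_one_def)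
qed

lemma p_Lambda: assumes k: "0 < k" shows "sf_p k \<in> Lambda k"
  unfolding Lambda_def mem_Collect_eq
proof (rule conjI; intro allI impI)
  fix m assume "sf_p k m \<noteq> 0"
  then obtain j where j: "m = ei k j" by (auto simp: sf_p_eq split: if_splits)
  have "{i. m i \<noteq> 0} = {j}" using k by (auto simp: j ei_def)
  thus "fin_mono m \<and> mdeg m = k" by (simp add: fin_mono_def mdeg_def j ei_def)
next
  fix \<sigma> :: "nat \<Rightarrow> nat" and m assume s: "bij \<sigma>"
  have inj: "inj \<sigma>" using s by (rule bij_is_inj)
  have c1: "\<sigma> (inv \<sigma> l) = l" for l using bij_is_surj[OF s] by (rule surj_f_inv_f)
  have c2: "inv \<sigma> (\<sigma> l) = l" for l using inj by (rule inv_f_f)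
  have "(\<exists>j. m \<circ> \<sigma> = ei k j) = (\<exists>j. m = ei k j)"
  proof
    assume "\<exists>j. m \<circ> \<sigma> = ei k j"
    then obtain j where j: "m \<circ> \<sigma> = ei k j" by blast
    have "m = ei k (\<sigma> j)"
    proof
      fix l
      have "m l = (m \<circ> \<sigma>) (inv \<sigma> l)" by (simp add: c1)
      also have "\<dots> = ei k (\<sigma> j) l" unfolding j ei_def by (auto simp: c1 c2)
      finally show "m l = ei k (\<sigma> j) l" .
    qed
    thus "\<exists>j. m = ei k j" by blast
  next
    assume "\<exists>j. m = ei k j"
    then obtain j where j: "m = ei k j" by blast
    have "m \<circ> \<sigma> = ei k (inv \<sigma> j)"
    proof
      fix l show "(m \<circ> \<sigma>) l = ei k (inv \<sigma> j) l" unfolding j ei_def by (auto simp: c1 c2)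
    qed
    thus "\<exists>j. m \<circ> \<sigma> = ei k j" by blast
  qed
  thus "sf_p k (m \<circ> \<sigma>) = sf_p k m" by (simp add: sf_p_eq)
qed

lemma S_pp_add: "S (pp (add_mset x \<alpha>)) = sf_mult (sf_p x) (S (pp \<alpha>))"
  by (simp add: pp_def S_ops S_P)

lemma S_pp_empty: "S (pp {#}) = sf_one"
  by (simp add: pp_empty S_ops)

lemma pp_Lambda: "(\<forall>x\<in>#\<alpha>. 0 < x) \<Longrightarrow> S (pp \<alpha>) \<in> Lambda (sum_mset \<alpha>)"
proof (induction \<alpha>)
  case empty thus ?case by (simp add: S_pp_empty one_Lambda)
next
  case (add x \<alpha>)
  hence "sf_mult (sf_p x) (S (pp \<alpha>)) \<in> Lambda (x + sum_mset \<alpha>)"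
    by (intro Lambda_mult p_Lambda) auto
  thus ?case by (simp add: S_pp_add)
qed



lemma vals_split:
  assumes fin: "fin_mono m"
  shows "vals m = (if m j = 0 then {#} else {#m j#}) + vals (m(j := 0))"
proof -
  let ?S = "{i. m i \<noteq> 0}" and ?S' = "{i. (m(j := 0)) i \<noteq> 0}"
  have fS: "finite ?S" using fin by (simp add: fin_mono_def)
  have S': "?S' = ?S - {j}" by auto
  have fS': "finite ?S'" using fS S' by simp
  have agree: "image_mset (m(j := 0)) (mset_set ?S') = image_mset m (mset_set ?S')"
  proof (rule image_mset_cong)
    fix i assume "i \<in># mset_set ?S'"
    hence "i \<in> ?S'" using fS' by simp
    hence "i \<noteq> j" by auto
    thus "(m(j := 0)) i = m i" by simp
  qed
  show ?thesis
  proof (cases "m j = 0")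
    case True
    hence "?S' = ?S" by auto
    thus ?thesis using agree True by (simp add: vals_def)
  next
    case False
    hence "?S = insert j ?S'" by auto
    hence "mset_set ?S = add_mset j (mset_set ?S')"
      using fS S' by (simp add: mset_set.insert_remove)
    hence "vals m = add_mset (m j) (image_mset m (mset_set ?S'))" by (simp add: vals_def)
    thus ?thesis using agree False by (simp add: vals_def)
  qed
qed

lemma pp_eval:
  assumes "\<forall>x\<in>#\<alpha>. 0 < x"
  shows "0 \<le> S (pp \<alpha>) m \<and>
         (S (pp \<alpha>) m \<noteq> 0 \<longrightarrow> fin_mono m \<and> size (vals m) \<le> size \<alpha> \<and> (size (vals m) = size \<alpha> \<longrightarrow> vals m = \<alpha>)) \<and>
         (fin_mono m \<and> vals m = \<alpha> \<longrightarrow> 0 < S (pp \<alpha>) m)"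
  using assms
proof (induction \<alpha> arbitrary: m)
  case empty
  have e: "S (pp {#}) m = sf_one m" by (simp add: S_pp_empty)
  have A: "(\<forall>i. m i = 0) \<Longrightarrow> fin_mono m \<and> vals m = {#}"
    by (simp add: fin_mono_def vals_def)
  have B: "fin_mono m \<Longrightarrow> vals m = {#} \<Longrightarrow> \<forall>i. m i = 0"
  proof -
    assume "fin_mono m" "vals m = {#}"
    hence "mset_set {i. m i \<noteq> 0} = {#}" "finite {i. m i \<noteq> 0}" by (auto simp: vals_def fin_mono_def)
    hence "{i. m i \<noteq> 0} = {}" by (simp add: mset_set_empty_iff)
    thus "\<forall>i. m i = 0" by auto
  qed
  show ?case
  proof (cases "\<forall>i. m i = 0")
    case True
    hence "S (pp {#}) m = 1" using e by (simp add: sf_one_def)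
    thus ?thesis using A[OF True] by simp
  next
    case False
    hence "S (pp {#}) m = 0" using e by (simp add: sf_one_def)
    moreover have "\<not> (fin_mono m \<and> vals m = {#})" using B False by blast
    ultimately show ?thesis by simp
  qed
next
  case (add x \<alpha>)
  have x: "0 < x" using add.prems by simp
  have IH: "\<And>m. 0 \<le> S (pp \<alpha>) m \<and>
         (S (pp \<alpha>) m \<noteq> 0 \<longrightarrow> fin_mono m \<and> size (vals m) \<le> size \<alpha> \<and> (size (vals m) = size \<alpha> \<longrightarrow> vals m = \<alpha>)) \<and>
         (fin_mono m \<and> vals m = \<alpha> \<longrightarrow> 0 < S (pp \<alpha>) m)" using add by simp
  show ?case
  proof (cases "fin_mono m")
    case False
    thus ?thesis by (simp add: S_pp_add sf_mult_nonfin)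
  next
    case fin: True
    let ?E = "{j. x \<le> m j}"
    have fE: "finite ?E"
    proof (rule finite_subset)
      show "?E \<subseteq> {i. m i \<noteq> 0}" using x by auto
      show "finite {i. m i \<noteq> 0}" using fin by (simp add: fin_mono_def)
    qed
    have eq: "S (pp (add_mset x \<alpha>)) m = (\<Sum>j\<in>?E. S (pp \<alpha>) (m(j := m j - x)))"
      by (simp add: S_pp_add sf_mult_p[OF fin x])
    have nn: "0 \<le> S (pp (add_mset x \<alpha>)) m" unfolding eq using IH by (intro sum_nonneg) blast
    have tri: "size (vals m) \<le> size (add_mset x \<alpha>) \<and> (size (vals m) = size (add_mset x \<alpha>) \<longrightarrow> vals m = add_mset x \<alpha>)"
      if nz: "S (pp (add_mset x \<alpha>)) m \<noteq> 0"
    proof -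
      obtain j where j: "j \<in> ?E" "S (pp \<alpha>) (m(j := m j - x)) \<noteq> 0"
        using nz unfolding eq by (rule sum.not_neutral_contains_not_neutral)
      let ?m' = "m(j := m j - x)"
      have I: "size (vals ?m') \<le> size \<alpha>" "size (vals ?m') = size \<alpha> \<longrightarrow> vals ?m' = \<alpha>" using IH[of ?m'] j(2) by auto
      have fin': "fin_mono ?m'" by (rule fin_mono_update[OF fin])
      have V0: "vals ?m' = (if m j - x = 0 then {#} else {#m j - x#}) + vals (m(j := 0))"
        using vals_split[OF fin', of j] by simp
      have mj: "m j \<noteq> 0" using j(1) x by auto
      have V: "vals m = {#m j#} + vals (m(j := 0))" using vals_split[OF fin, of j] mj by simp
      show ?thesis
      proof (cases "m j = x")
        case True
        hence "vals ?m' = vals (m(j := 0))" using V0 by simp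
        hence "vals m = add_mset x (vals ?m')" using V True by simp
        thus ?thesis using I by auto
      next
        case False
        hence "m j - x \<noteq> 0" using j(1) by auto
        hence "size (vals ?m') = size (vals m)" using V0 V by simp
        thus ?thesis using I by simp
      qed
    qed
    have pos: "0 < S (pp (add_mset x \<alpha>)) m" if v: "vals m = add_mset x \<alpha>"
    proof -
      have "x \<in># vals m" using v by simp
      then obtain j where j: "j \<in># mset_set {i. m i \<noteq> 0}" "x = m j" by (auto simp: vals_def)
      have mj: "m j = x" using j by simp
      have jE: "j \<in> ?E" using mj by simp
      let ?m' = "m(j := m j - x)"
      have m': "?m' = m(j := 0)" using mj by simp
      have "vals m = {#x#} + vals (m(j := 0))" using vals_split[OF fin, of j] mj x by simp
      hence "vals ?m' = \<alpha>" using v m' by simp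
      hence p': "0 < S (pp \<alpha>) ?m'" using IH[of ?m'] fin_mono_update[OF fin] by blast
      have "S (pp \<alpha>) ?m' \<le> (\<Sum>j\<in>?E. S (pp \<alpha>) (m(j := m j - x)))"
        by (rule member_le_sum[OF jE _ fE]) (use IH in blast)
      thus ?thesis using p' eq by simp
    qed
    show ?thesis using nn tri pos fin by blast
  qed
qed

lemma p_basis: "is_basis_Lambda n (\<lambda>\<alpha>. S (pp \<alpha>))"
proof (rule tri_basis[OF msf_basis, where T = "\<lambda>\<alpha> \<beta>. S (pp \<alpha>) (mnf \<beta>)" and r = size])
  fix \<alpha> m assume a: "\<alpha> \<in> PT n"
  have "S (pp \<alpha>) \<in> Lambda n" using pp_Lambda[OF PT_pos[OF a]] a by (simp add: partitions_def)
  thus "S (pp \<alpha>) m = (\<Sum>\<beta>\<in>PT n. S (pp \<alpha>) (mnf \<beta>) * msf \<beta> m)" by (rule msf_expand)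
next
  fix \<alpha> assume a: "\<alpha> \<in> PT n"
  have "fin_mono (mnf \<alpha>)" "vals (mnf \<alpha>) = \<alpha>" using mnf_props[OF PT_pos[OF a]] by auto
  thus "S (pp \<alpha>) (mnf \<alpha>) \<noteq> 0" using pp_eval[OF PT_pos[OF a], of "mnf \<alpha>"] by auto
next
  fix \<alpha> \<beta> assume a: "\<alpha> \<in> PT n" and b: "\<beta> \<in> PT n" and nz: "S (pp \<alpha>) (mnf \<beta>) \<noteq> 0"
  have v: "vals (mnf \<beta>) = \<beta>" using mnf_props[OF PT_pos[OF b]] by auto
  show "\<beta> = \<alpha> \<or> size \<beta> < size \<alpha>" using pp_eval[OF PT_pos[OF a], of "mnf \<beta>"] nz v by auto
qed

lemma TR_basis:
  assumes TRs: "\<And>\<alpha>. \<alpha> \<in> PT n \<Longrightarrow> TR n \<alpha> (x \<alpha>)"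
    and b: "\<And>\<alpha>. \<alpha> \<in> PT n \<Longrightarrow> b \<alpha> = S (x \<alpha>)"
  shows "is_basis_Lambda n b"
proof -
  have "\<forall>\<alpha>\<in>PT n. \<exists>c. REP n (x \<alpha>) c \<and> (\<forall>\<nu>. 0 \<le> c \<nu>) \<and> 0 < c \<alpha> \<and>
      (\<forall>\<nu>\<in>PT n. c \<nu> \<noteq> 0 \<longrightarrow> \<nu> = \<alpha> \<or> size \<alpha> < size \<nu>)"
    using TRs by (simp add: TR_def)
  then obtain C where C: "\<forall>\<alpha>\<in>PT n. REP n (x \<alpha>) (C \<alpha>) \<and> (\<forall>\<nu>. 0 \<le> C \<alpha> \<nu>) \<and> 0 < C \<alpha> \<alpha> \<and>
      (\<forall>\<nu>\<in>PT n. C \<alpha> \<nu> \<noteq> 0 \<longrightarrow> \<nu> = \<alpha> \<or> size \<alpha> < size \<nu>)"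
    by (rule bchoice[THEN exE]) blast
  show ?thesis
  proof (rule tri_basis[OF p_basis, where T = C and r = "\<lambda>\<nu>. n - size \<nu>"])
    fix \<alpha> m assume a: "\<alpha> \<in> PT n"
    have "x \<alpha> = (\<Sum>\<nu>\<in>PT n. sc (C \<alpha> \<nu>) * pp \<nu>)" using C a by (simp add: REP_def)
    hence "S (x \<alpha>) m = (\<Sum>\<nu>\<in>PT n. C \<alpha> \<nu> * S (pp \<nu>) m)" by (simp add: S_sum S_sc_mult)
    thus "b \<alpha> m = (\<Sum>\<nu>\<in>PT n. C \<alpha> \<nu> * S (pp \<nu>) m)" using b[OF a] by simp
  next
    fix \<alpha> assume a: "\<alpha> \<in> PT n"
    thus "C \<alpha> \<alpha> \<noteq> 0" using C by auto
  next
    fix \<alpha> \<beta> assume a: "\<alpha> \<in> PT n" and bb: "\<beta> \<in> PT n" and nz: "C \<alpha> \<beta> \<noteq> 0"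
    have "\<beta> = \<alpha> \<or> size \<alpha> < size \<beta>" using C a bb nz by blast
    moreover have "size \<beta> \<le> n" using size_le_sum[OF PT_pos[OF bb]] bb by (simp add: partitions_def)
    ultimately show "\<beta> = \<alpha> \<or> n - size \<beta> < n - size \<alpha>" by auto
  qed
qed

theorem mainTheorem6:
  fixes n :: nat
  shows "is_basis_Lambda n sf_hpart \<and> is_basis_Lambda n sf_C \<and> is_basis_Lambda n sf_K"
proof (intro conjI)
  show "is_basis_Lambda n sf_hpart"
  proof (rule TR_basis[where x = hp])
    fix \<alpha> assume a: "\<alpha> \<in> PT n"
    show "TR n \<alpha> (hp \<alpha>)" using TR_hp[OF PT_pos[OF a]] a by (simp add: partitions_def)
    show "sf_hpart \<alpha> = S (hp \<alpha>)" by (rule sf_hpart_S)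
  qed
  show "is_basis_Lambda n sf_C"
  proof (rule TR_basis[where x = CC])
    fix \<alpha> assume a: "\<alpha> \<in> PT n"
    show "TR n \<alpha> (CC \<alpha>)" by (rule TR_CC[OF a])
    show "sf_C \<alpha> = S (CC \<alpha>)" by (rule sf_C_S)
  qed
  show "is_basis_Lambda n sf_K"
  proof (rule TR_basis[where x = KK])
    fix \<alpha> assume a: "\<alpha> \<in> PT n"
    show "TR n \<alpha> (KK \<alpha>)" by (rule TR_KK[OF a])
    show "sf_K \<alpha> = S (KK \<alpha>)" by (rule sf_K_S)
  qed
qed

end
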